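(* Assume $D=\mathbb R$ and that $\phi:\mathbb R\to(0,\infty)$ is strictly positive and twice continuously differentiable. Let $\lambda>0$ and $\Lambda(g)=l_t(g)+\lambda\|\Pi g\|^2$ on $W^{m,2}([0,t])$. Then the gradient $\nabla\Lambda:W^{m,2}([0,t])\to W^{m,2}([0,t])$ is Lipschitz continuous on every bounded subset of $W^{m,2}([0,t])$.
   Context: Let $(\Omega,\mathcal F,(\mathcal F_s)_{s\ge 0},P)$ be a filtered probability space with right-continuous filtration, and let $(N_s)_{s\ge0}$ be an adapted counting process which under $P$ is a homogeneous Poisson process with rate $1$. Fix $t>0$ and let $\tau_1<\dots<\tau_{N_t}$ be the jump times of $N$ in $[0,t]$. Let $(Z_s)_{0\le s\le t}$ be a real-valued càdlàg semimartingale and $(Y_s)_{0\le s\le t}$ a predictable càdlàg process with values in $[0,\infty)$ such that $Y_s>0$ whenever $\Delta N_s=1$. Fix an integer $m\ge1$. $W^{m,2}([0,t])$ is equipped with an inner product $\langle\cdot,\cdot\rangle$, with norm $\|\cdot\|$ equivalent to the standard Sobolev norm, making it a reproducing kernel Hilbert space with kernel $R$. Fix $\psi_1,\ldots,\psi_l\in W^{m,2}([0,t])$ and let $\Pi$ be the orthogonal projection onto $\mathrm{span}\{\psi_1,\ldots,\psi_l\}^\perp$. Stochastic integrals are defined pathwise: $\int_0^{s-} h(u)\,\mathrm{d}Z_u:=h(s)Z_{s-}-h(0)Z_0-\int_0^s Z_{u-}h'(u)\,\mathrm{d}u$ for weakly differentiable $h$, and $X_{s-}g:=\int_0^{s-}g(s-u)\,\mathrm{d}Z_u$.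 The minus-log-likelihood is $$l_t(g)=\int_0^t Y_s\,\phi(X_{s-}g)\,\mathrm{d}s-\sum_{i=1}^{N_t}\log\big(Y_{\tau_i}\phi(X_{\tau_i-}g)\big),$$ and $\nabla\Lambda(g)=\nabla l_t(g)+2\lambda\Pi g$, where $\nabla l_t(g)\in W^{m,2}([0,t])$ represents the Gâteaux derivative of $l_t$ at $g$ via $\langle\cdot,\cdot\rangle$. *)

theory Defs
  imports "HOL-Analysis.Analysis"
begin

text \<open>Pathwise objects on the interval [0,t].  Functions real => real are used
  throughout; elements of the Sobolev space are normalised to vanish outside [0,t].\<close>

definition cadlag_on :: "real \<Rightarrow> (real \<Rightarrow> real) \<Rightarrow> bool" where
  "cadlag_on t Z \<longleftrightarrow>
     (\<forall>x\<in>{0..<t}. (Z \<longlongrightarrow> Z x) (at_right x)) \<and>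
     (\<forall>x\<in>{0<..t}. \<exists>L. (Z \<longlongrightarrow> L) (at_left x))"

definition leftlim :: "(real \<Rightarrow> real) \<Rightarrow> real \<Rightarrow> real" where
  "leftlim Z s = (if s \<le> 0 then Z 0 else Lim (at_left s) Z)"

text \<open>d 0 = h, d (k+1) is the (weak) derivative of d k, k < m, each d k square integrable
  on [0,t]; this is W^{m,2}([0,t]) in dimension one (absolutely continuous (m-1)-th derivative,
  m-th derivative in L^2).\<close>
definition sob_derivs :: "nat \<Rightarrow> real \<Rightarrow> (real \<Rightarrow> real) \<Rightarrow> (nat \<Rightarrow> real \<Rightarrow> real) \<Rightarrow> bool" where
  "sob_derivs m t h d \<longleftrightarrow>
     (\<forall>x\<in>{0..t}. d 0 x = h x) \<and>
     (\<forall>k\<le>m. set_borel_measurable lborel {0..t} (d k) \<and>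
             set_integrable lborel {0..t} (\<lambda>x. (d k x)^2)) \<and>
     (\<forall>k<m. \<forall>x\<in>{0..t}. d k x = d k 0 + (LBINT u:{0..x}. d (Suc k) u))"

definition sobolev_space :: "nat \<Rightarrow> real \<Rightarrow> (real \<Rightarrow> real) set" where
  "sobolev_space m t = {h. (\<forall>x. x \<notin> {0..t} \<longrightarrow> h x = 0) \<and> (\<exists>d. sob_derivs m t h d)}"

definition sob_sqnorm :: "nat \<Rightarrow> real \<Rightarrow> (nat \<Rightarrow> real \<Rightarrow> real) \<Rightarrow> real" where
  "sob_sqnorm m t d = (\<Sum>k\<le>m. LBINT x:{0..t}. (d k x)^2)"

definition sobolev_ip :: "nat \<Rightarrow> real \<Rightarrow> ((real \<Rightarrow> real) \<Rightarrow> (real \<Rightarrow> real) \<Rightarrow> real) \<Rightarrow> bool" where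
  "sobolev_ip m t ip \<longleftrightarrow>
     (\<forall>f\<in>sobolev_space m t. \<forall>g\<in>sobolev_space m t. ip f g = ip g f) \<and>
     (\<forall>f\<in>sobolev_space m t. \<forall>g\<in>sobolev_space m t. \<forall>h\<in>sobolev_space m t. \<forall>a b.
        ip (\<lambda>x. a * f x + b * g x) h = a * ip f h + b * ip g h) \<and>
     (\<exists>c C. 0 < c \<and> 0 < C \<and>
        (\<forall>h\<in>sobolev_space m t. \<forall>d. sob_derivs m t h d \<longrightarrow>
           c * sob_sqnorm m t d \<le> ip h h \<and> ip h h \<le> C * sob_sqnorm m t d))"

definition rkhs_kernel :: "nat \<Rightarrow> real \<Rightarrow> ((real \<Rightarrow> real) \<Rightarrow> (real \<Rightarrow> real) \<Rightarrow> real)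
    \<Rightarrow> (real \<Rightarrow> real \<Rightarrow> real) \<Rightarrow> bool" where
  "rkhs_kernel m t ip R \<longleftrightarrow>
     (\<forall>x\<in>{0..t}. R x \<in> sobolev_space m t \<and> (\<forall>h\<in>sobolev_space m t. ip (R x) h = h x))"

definition orth_proj :: "nat \<Rightarrow> real \<Rightarrow> ((real \<Rightarrow> real) \<Rightarrow> (real \<Rightarrow> real) \<Rightarrow> real)
    \<Rightarrow> (nat \<Rightarrow> real \<Rightarrow> real) \<Rightarrow> nat \<Rightarrow> (real \<Rightarrow> real) \<Rightarrow> (real \<Rightarrow> real)" where
  "orth_proj m t ip psi l g =
     (THE p. p \<in> sobolev_space m t \<and> (\<forall>i<l. ip p (psi i) = 0) \<and>
             (\<exists>c. \<forall>x. g x - p x = (\<Sum>i<l. c i * psi i x)))"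

definition wderiv :: "real \<Rightarrow> (real \<Rightarrow> real) \<Rightarrow> (real \<Rightarrow> real)" where
  "wderiv t g = (SOME g'. set_borel_measurable lborel {0..t} g' \<and>
                          set_integrable lborel {0..t} g' \<and>
                          (\<forall>x\<in>{0..t}. g x = g 0 + (LBINT u:{0..x}. g' u)))"

text \<open>Pathwise stochastic integral int_0^{s-} h(u) dZ_u, given h and its derivative h'.\<close>
definition pw_int :: "(real \<Rightarrow> real) \<Rightarrow> (real \<Rightarrow> real) \<Rightarrow> (real \<Rightarrow> real) \<Rightarrow> real \<Rightarrow> real" where
  "pw_int Z h h' s = h s * leftlim Z s - h 0 * Z 0 - (LBINT u:{0..s}. leftlim Z u * h' u)"

definition Xminus :: "real \<Rightarrow> (real \<Rightarrow> real) \<Rightarrow> (real \<Rightarrow> real) \<Rightarrow> real \<Rightarrow> real" where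
  "Xminus t Z g s = pw_int Z (\<lambda>u. g (s - u)) (\<lambda>u. - wderiv t g (s - u)) s"

text \<open>Minus-log-likelihood l_t(g); J is the (finite) set of jump times of N in [0,t].\<close>
definition loglik :: "(real \<Rightarrow> real) \<Rightarrow> (real \<Rightarrow> real) \<Rightarrow> (real \<Rightarrow> real) \<Rightarrow> real set \<Rightarrow> real
    \<Rightarrow> (real \<Rightarrow> real) \<Rightarrow> real" where
  "loglik phi Y Z J t g =
     (LBINT s:{0..t}. Y s * phi (Xminus t Z g s)) - (\<Sum>\<tau>\<in>J. ln (Y \<tau> * phi (Xminus t Z g \<tau>)))"

end

theory Submission
  imports Defs
begin
lemma sint_const: "set_integrable lborel {a..b::real} (\<lambda>x. c::real)"
  unfolding set_integrable_def
  by (rule integrable_scaleR_left) (cases "a \<le> b"; simp add: integrable_real_indicator)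

lemma sint_nonneg:
  fixes f :: "_ \<Rightarrow> real"
  assumes "\<And>x. x \<in> A \<Longrightarrow> 0 \<le> f x"
  shows "0 \<le> (LINT x:A|M. f x)"
  unfolding set_lebesgue_integral_def
  by (rule integral_nonneg_AE) (use assms in \<open>auto split: split_indicator\<close>)

lemma sint_bdd:
  fixes f :: "real \<Rightarrow> real"
  assumes "set_borel_measurable lborel {a..b} f" "\<forall>x\<in>{a..b}. \<bar>f x\<bar> \<le> K"
  shows "set_integrable lborel {a..b} f"
proof -
  have h1: "integrable lborel (\<lambda>x. indicat_real {a..b} x *\<^sub>R K)"
    using sint_const[of a b K] unfolding set_integrable_def .
  show ?thesis unfolding set_integrable_def
  proof (rule Bochner_Integration.integrable_bound[OF h1])
  show "(\<lambda>x. indicat_real {a..b} x *\<^sub>R f x) \<in> borel_measurable lborel"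
    using assms(1) unfolding set_borel_measurable_def .
  show "AE x in lborel. norm (indicat_real {a..b} x *\<^sub>R f x) \<le> norm (indicat_real {a..b} x *\<^sub>R K)"
  proof (intro AE_I2)
    fix x show "norm (indicat_real {a..b} x *\<^sub>R f x) \<le> norm (indicat_real {a..b} x *\<^sub>R K)"
    proof (cases "x \<in> {a..b}")
      case True
      then have "\<bar>f x\<bar> \<le> K" using assms(2) by blast
      then show ?thesis using True abs_ge_self[of K] by simp
    qed simp
  qed
  qed
qed

lemma sint_abs_bound:
  fixes f :: "real \<Rightarrow> real"
  assumes "set_integrable lborel {a..b} f" "a \<le> b" "\<forall>x\<in>{a..b}. \<bar>f x\<bar> \<le> K"
  shows "\<bar>LBINT x:{a..b}. f x\<bar> \<le> K * (b - a)"
proof -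
  have "\<bar>LBINT x:{a..b}. f x\<bar> \<le> (LBINT x:{a..b}. norm (f x))"
    using set_integral_norm_bound[OF assms(1)] by simp
  also have "\<dots> \<le> (LBINT x:{a..b}. K)"
    using assms by (intro set_integral_mono) (auto intro: set_integrable_abs sint_const)
  also have "\<dots> = K * (b - a)"
    using assms(2) by (simp add: set_integral_const)
  finally show ?thesis .
qed

lemma sint_sq:
  fixes f :: "real \<Rightarrow> real"
  assumes "set_borel_measurable lborel {a..b} f" "set_integrable lborel {a..b} (\<lambda>x. (f x)^2)"
  shows "set_integrable lborel {a..b} f"
proof -
  have h1: "integrable lborel (\<lambda>x. indicat_real {a..b} x *\<^sub>R (1 + (f x)\<^sup>2))"
    using set_integral_add(1)[OF sint_const[of a b 1] assms(2)] unfolding set_integrable_def .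
  show ?thesis unfolding set_integrable_def
  proof (rule Bochner_Integration.integrable_bound[OF h1])
  show "(\<lambda>x. indicat_real {a..b} x *\<^sub>R f x) \<in> borel_measurable lborel"
    using assms(1) unfolding set_borel_measurable_def .
  have aux: "\<bar>u\<bar> \<le> 1 + u^2" for u :: real
  proof (cases "\<bar>u\<bar> \<le> 1")
    case True then show ?thesis by (smt (verit) zero_le_power2)
  next
    case False
    then have "\<bar>u\<bar> * 1 \<le> \<bar>u\<bar> * \<bar>u\<bar>" by (intro mult_left_mono) auto
    then show ?thesis by (simp add: power2_eq_square abs_mult_self_eq)
  qed
  show "AE x in lborel. norm (indicat_real {a..b} x *\<^sub>R f x) \<le> norm (indicat_real {a..b} x *\<^sub>R (1 + (f x)\<^sup>2))"
    using aux by (intro AE_I2) (auto split: split_indicator)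
  qed
qed

lemma real_cs_aux:
  fixes A t Q :: real
  assumes "0 < t" "0 \<le> Q" "\<And>r. 0 < r \<Longrightarrow> A \<le> r * t / 2 + Q / (2 * r)"
  shows "A \<le> sqrt (t * Q)"
proof (cases "Q = 0")
  case True
  show ?thesis
  proof (rule ccontr)
    assume "\<not> ?thesis"
    then have A: "0 < A" using True by simp
    have "A \<le> (A / t) * t / 2 + Q / (2 * (A / t))" using assms(3)[of "A/t"] A assms(1) by simp
    then show False using True A assms(1) by simp
  qed
next
  case False
  then have Q: "0 < Q" using assms(2) by simp
  define r where "r = sqrt (Q / t)"
  have r: "0 < r" using Q assms(1) by (simp add: r_def)
  have "r * t = sqrt (t * Q)"
    using Q assms(1) by (simp add: r_def real_sqrt_divide field_simps real_sqrt_mult)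
  moreover have "Q / r = sqrt (t * Q)"
    using Q assms(1) by (simp add: r_def real_sqrt_divide field_simps real_sqrt_mult)
  ultimately show ?thesis using assms(3)[OF r] by (simp add: field_simps)
qed

lemma sint_abs_sq:
  fixes f :: "real \<Rightarrow> real"
  assumes t: "0 < t" and "set_borel_measurable lborel {0..t} f" "set_integrable lborel {0..t} (\<lambda>x. (f x)^2)"
  shows "(LBINT x:{0..t}. \<bar>f x\<bar>) \<le> sqrt (t * (LBINT x:{0..t}. (f x)^2))"
proof (rule real_cs_aux[OF t])
  show "0 \<le> (LBINT x:{0..t}. (f x)^2)"
    by (rule sint_nonneg) auto
  fix r :: real assume r: "0 < r"
  have fi: "set_integrable lborel {0..t} f" using sint_sq assms by blast
  have "\<bar>u\<bar> \<le> r / 2 + u^2 / (2 * r)" for u :: real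
  proof -
    have "0 \<le> (\<bar>u\<bar> - r)^2" by simp
    then have "2 * r * \<bar>u\<bar> \<le> r^2 + u^2" by (simp add: power2_eq_square algebra_simps)
    then show ?thesis using r by (simp add: field_simps power2_eq_square)
  qed
  then have "(LBINT x:{0..t}. \<bar>f x\<bar>) \<le> (LBINT x:{0..t}. r / 2 + (f x)^2 / (2 * r))"
    using fi assms(3) by (intro set_integral_mono) (auto intro: set_integrable_abs sint_const)
  also have "\<dots> = r * t / 2 + (LBINT x:{0..t}. (f x)^2) / (2 * r)"
    using t assms(3) by (subst set_integral_add(2)) (auto simp: set_integral_const intro: sint_const)
  finally show "(LBINT x:{0..t}. \<bar>f x\<bar>) \<le> r * t / 2 + (LBINT x:{0..t}. (f x)^2) / (2 * r)" .
qed

lemma ae_zero_intervals: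
  fixes v :: "real \<Rightarrow> real"
  assumes t: "0 \<le> t" and int: "set_integrable lborel {0..t} v"
    and z: "\<And>x. x \<in> {0..t} \<Longrightarrow> (LBINT u:{0..x}. v u) = 0"
  shows "AE x in lborel. x \<in> {0..t} \<longrightarrow> v x = 0"
proof -
  define f where "f = (\<lambda>x. indicator {0..t} x * v x)"
  have fi: "integrable lborel f" using int by (simp add: set_integrable_def f_def)
  then have fm[measurable]: "f \<in> borel_measurable borel" by (metis borel_measurable_integrable measurable_lborel2)
  define P where "P = (\<lambda>x. max 0 (f x))"
  define N where "N = (\<lambda>x. max 0 (- f x))"
  have Pi: "integrable lborel P" unfolding P_def using fi by auto
  have Ni: "integrable lborel N" unfolding N_def using fi by auto
  have Pm[measurable]: "P \<in> borel_measurable borel" unfolding P_def by measurable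
  have Nm[measurable]: "N \<in> borel_measurable borel" unfolding N_def by measurable
  have iP: "integrable lborel (\<lambda>y. indicator {x<..} y * P y)" for x
    using integrable_mult_indicator[OF _ Pi, of "{x<..}"] by simp
  have iN: "integrable lborel (\<lambda>y. indicator {x<..} y * N y)" for x
    using integrable_mult_indicator[OF _ Ni, of "{x<..}"] by simp
  have key: "(\<integral>y. indicator {x<..} y * f y \<partial>lborel) = 0" for x
  proof (cases "x < 0")
    case True
    then have "(\<lambda>y. indicator {x<..} y * f y) = (\<lambda>y. indicator {0..t} y *\<^sub>R v y)"
      by (auto simp: f_def split: split_indicator)
    then show ?thesis using z[of t] t by (simp add: set_lebesgue_integral_def)
  next
    case False
    show ?thesis
    proof (cases "t \<le> x")
      case True
      then have "(\<lambda>y. indicator {x<..} y * f y) = (\<lambda>y. 0)"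
        by (auto simp: f_def split: split_indicator)
      then show ?thesis by simp
    next
      case False2: False
      have ix: "set_integrable lborel {0..x} v"
        by (rule set_integrable_subset[OF int]) (use False2 in auto)
      have "(\<lambda>y. indicator {x<..} y * f y) = (\<lambda>y. indicator {0..t} y *\<^sub>R v y - indicator {0..x} y *\<^sub>R v y)"
        using False False2 by (auto simp: f_def split: split_indicator)
      then have "(\<integral>y. indicator {x<..} y * f y \<partial>lborel) = (LBINT u:{0..t}. v u) - (LBINT u:{0..x}. v u)"
        using int ix by (simp add: set_lebesgue_integral_def set_integrable_def)
      then show ?thesis using z[of t] z[of x] t False False2 by simp
    qed
  qed
  have em: "emeasure (density lborel (\<lambda>y. ennreal (P y))) {x<..} = ennreal (\<integral>y. indicator {x<..} y * P y \<partial>lborel)"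
      and en: "emeasure (density lborel (\<lambda>y. ennreal (N y))) {x<..} = ennreal (\<integral>y. indicator {x<..} y * N y \<partial>lborel)" for x
  proof -
    have "emeasure (density lborel (\<lambda>y. ennreal (P y))) {x<..} = (\<integral>\<^sup>+y. ennreal (P y) * indicator {x<..} y \<partial>lborel)"
      by (simp add: emeasure_density)
    also have "\<dots> = (\<integral>\<^sup>+y. ennreal (indicator {x<..} y * P y) \<partial>lborel)"
      by (intro nn_integral_cong) (auto split: split_indicator)
    also have "\<dots> = ennreal (\<integral>y. indicator {x<..} y * P y \<partial>lborel)"
      using iP by (intro nn_integral_eq_integral) (auto simp: P_def split: split_indicator)
    finally show "emeasure (density lborel (\<lambda>y. ennreal (P y))) {x<..} = ennreal (\<integral>y. indicator {x<..} y * P y \<partial>lborel)" .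
    have "emeasure (density lborel (\<lambda>y. ennreal (N y))) {x<..} = (\<integral>\<^sup>+y. ennreal (N y) * indicator {x<..} y \<partial>lborel)"
      by (simp add: emeasure_density)
    also have "\<dots> = (\<integral>\<^sup>+y. ennreal (indicator {x<..} y * N y) \<partial>lborel)"
      by (intro nn_integral_cong) (auto split: split_indicator)
    also have "\<dots> = ennreal (\<integral>y. indicator {x<..} y * N y \<partial>lborel)"
      using iN by (intro nn_integral_eq_integral) (auto simp: N_def split: split_indicator)
    finally show "emeasure (density lborel (\<lambda>y. ennreal (N y))) {x<..} = ennreal (\<integral>y. indicator {x<..} y * N y \<partial>lborel)" .
  qed
  have PN: "(\<integral>y. indicator {x<..} y * P y \<partial>lborel) = (\<integral>y. indicator {x<..} y * N y \<partial>lborel)" for x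
  proof -
    note i1 = iP[of x] and i2 = iN[of x]
    have "(\<lambda>y. indicator {x<..} y * f y) = (\<lambda>y. indicator {x<..} y * P y - indicator {x<..} y * N y)"
      by (auto simp: P_def N_def max_def)
    then have "(\<integral>y. indicator {x<..} y * P y \<partial>lborel) - (\<integral>y. indicator {x<..} y * N y \<partial>lborel) = 0"
      using key[of x] i1 i2 by simp
    then show ?thesis by simp
  qed
  have "density lborel (\<lambda>y. ennreal (P y)) = density lborel (\<lambda>y. ennreal (N y))"
  proof (rule measure_eqI_lessThan)
    fix x
    show "emeasure (density lborel (\<lambda>y. ennreal (P y))) {x<..} < \<infinity>"
      using em[of x] by simp
    show "emeasure (density lborel (\<lambda>y. ennreal (P y))) {x<..} = emeasure (density lborel (\<lambda>y. ennreal (N y))) {x<..}"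
      using em[of x] en[of x] PN[of x] by simp
  qed simp_all
  then have "AE y in lborel. ennreal (P y) = ennreal (N y)"
    by (intro sigma_finite_measure.density_unique[OF lborel.sigma_finite_measure_axioms]) auto
  then have "AE y in lborel. f y = 0"
  proof (rule eventually_mono)
    fix y assume "ennreal (P y) = ennreal (N y)"
    then have "P y = N y" by (simp add: P_def N_def)
    then show "f y = 0" by (auto simp: P_def N_def max_def split: if_splits)
  qed
  then show ?thesis
    by (rule eventually_mono) (auto simp: f_def)
qed

lemma reflect_int:
  fixes f g :: "real \<Rightarrow> real"
  shows "(LBINT u:{0..s}. f u * g (s - u)) = (LBINT u:{0..s}. f (s - u) * g u)"
proof -
  have "(LBINT u:{0..s}. f u * g (s - u)) = (\<integral>u. indicator {0..s} u *\<^sub>R (f u * g (s - u)) \<partial>lborel)"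
    by (simp add: set_lebesgue_integral_def)
  also have "\<dots> = \<bar>-1\<bar> *\<^sub>R (\<integral>u. indicator {0..s} (s + -1 * u) *\<^sub>R (f (s + -1 * u) * g (s - (s + -1 * u))) \<partial>lborel)"
    by (rule lborel_integral_real_affine) simp
  also have "(\<lambda>u. indicator {0..s} (s + -1 * u) *\<^sub>R (f (s + -1 * u) * g (s - (s + -1 * u)))) = (\<lambda>u. indicator {0..s} u *\<^sub>R (f (s - u) * g u))"
    by (auto split: split_indicator)
  also have "\<bar>-1::real\<bar> *\<^sub>R (\<integral>u. indicator {0..s} u *\<^sub>R (f (s - u) * g u) \<partial>lborel) = (\<integral>u. indicator {0..s} u *\<^sub>R (f (s - u) * g u) \<partial>lborel)"
    by simp
  also have "\<dots> = (LBINT u:{0..s}. f (s - u) * g u)"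
    by (simp add: set_lebesgue_integral_def)
  finally show ?thesis .
qed

lemma rc_clamp_meas:
  fixes F :: "real \<Rightarrow> real"
  assumes t: "0 < t" and rc: "\<forall>x\<in>{0..<t}. (F \<longlongrightarrow> F x) (at_right x)"
  shows "(\<lambda>x. F (max 0 (min t x))) \<in> borel_measurable borel"
proof (rule borel_measurable_LIMSEQ_real[where u="\<lambda>n x. F (max 0 (min t (real_of_int \<lceil>real (Suc n) * x\<rceil> / real (Suc n))))"])
  fix n
  show "(\<lambda>x. F (max 0 (min t (real_of_int \<lceil>real (Suc n) * x\<rceil> / real (Suc n))))) \<in> borel_measurable borel"
  proof (rule measurable_compose_countable[where f="\<lambda>i x. F (max 0 (min t (real_of_int i / real (Suc n))))"
        and g="\<lambda>x. \<lceil>real (Suc n) * x\<rceil>"])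
    show "(\<lambda>x. \<lceil>real (Suc n) * x\<rceil>) \<in> borel \<rightarrow>\<^sub>M count_space UNIV"
      by measurable
  qed simp
next
  fix x :: real
  let ?y = "\<lambda>n. real_of_int \<lceil>real (Suc n) * x\<rceil> / real (Suc n)"
  have yge: "x \<le> ?y n" for n
    using le_of_int_ceiling[of "real (Suc n) * x"] by (simp add: field_simps)
  have ylt: "?y n \<le> x + 1 / real (Suc n)" for n
  proof -
    have "real_of_int \<lceil>real (Suc n) * x\<rceil> / real (Suc n) \<le> (real (Suc n) * x + 1) / real (Suc n)"
      by (rule divide_right_mono) simp_all
    then show ?thesis by (simp add: add_divide_distrib)
  qed
  show "(\<lambda>n. F (max 0 (min t (?y n)))) \<longlonglongrightarrow> F (max 0 (min t x))"
  proof (cases "x < 0")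
    case True
    have h: "?y n \<le> 0" for n
    proof -
      have "\<lceil>real (Suc n) * x\<rceil> \<le> 0" using True by (simp add: mult_nonneg_nonpos)
      then show ?thesis by (simp add: divide_nonpos_pos)
    qed
    have "max 0 (min t (?y n)) = 0" for n using h[of n] t by (simp add: min.absorb2 max.absorb1)
    then show ?thesis using True t by simp
  next
    case False
    show ?thesis
    proof (cases "t \<le> x")
      case True
      then have "max 0 (min t (?y n)) = t" for n using t yge[of n] by (simp add: max_def min_def)
      then show ?thesis using True t by simp
    next
      case False2: False
      have xt: "max 0 (min t x) = x" using False False2 by simp
      show ?thesis unfolding xt
      proof (rule LIMSEQ_I)
        fix e :: real assume e: "0 < e"
        have "\<forall>\<^sub>F y in at_right x. dist (F y) (F x) < e"
          using rc False False2 e tendsto_iff by fastforce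
        then obtain b where b: "b > x" "\<And>y. x < y \<Longrightarrow> y < b \<Longrightarrow> dist (F y) (F x) < e"
          using eventually_at_right[of x "x+1"] by auto
        define b' where "b' = min b t"
        have b': "b' > x" using b False2 by (simp add: b'_def)
        obtain N where N: "1 / real (Suc N) < b' - x"
          using reals_Archimedean[of "b' - x"] b' by (auto simp: inverse_eq_divide)
        show "\<exists>no. \<forall>n\<ge>no. norm (F (max 0 (min t (?y n))) - F x) < e"
        proof (intro exI allI impI)
          fix n assume "N \<le> n"
          then have "1 / real (Suc n) \<le> 1 / real (Suc N)" by (simp add: frac_le)
          then have yb: "?y n < b'" using ylt[of n] N by simp
          have y1: "?y n < t" using yb by (simp add: b'_def)
          have y2: "0 \<le> ?y n" using yge[of n] False by simp
          have yt: "max 0 (min t (?y n)) = ?y n" using y1 y2 by (simp add: min.absorb2 max.absorb2)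
          show "norm (F (max 0 (min t (?y n))) - F x) < e"
          proof (cases "?y n = x")
            case True then show ?thesis using yt e by simp
          next
            case False
            then have "x < ?y n" using yge[of n] by simp
            then show ?thesis using b(2)[of "?y n"] yb yt by (simp add: b'_def dist_norm)
          qed
        qed
      qed
    qed
  qed
qed

lemma ll_meas:
  fixes F :: "real \<Rightarrow> real"
  assumes t: "0 < t" and c: "cadlag_on t F"
  shows "\<exists>G\<in>borel_measurable borel. \<forall>x\<in>{0..t}. G x = leftlim F x"
proof -
  from c have rc: "\<forall>x\<in>{0..<t}. (F \<longlongrightarrow> F x) (at_right x)"
    and ll: "\<forall>x\<in>{0<..t}. \<exists>L. (F \<longlongrightarrow> L) (at_left x)" by (auto simp: cadlag_on_def)
  define H where "H = (\<lambda>x. F (max 0 (min t x)))"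
  have Hm[measurable]: "H \<in> borel_measurable borel" using rc_clamp_meas[OF t rc] by (simp add: H_def)
  define G where "G = (\<lambda>x. if x \<le> 0 then F 0 else if x \<le> t then Lim (at_left x) F else F t)"
  have "G \<in> borel_measurable borel"
  proof (rule borel_measurable_LIMSEQ_real[where u="\<lambda>n x. H (x - 1 / real (Suc n))"])
    show "(\<lambda>x. H (x - 1 / real (Suc n))) \<in> borel_measurable borel" for n by measurable
    fix x :: real
    have sx: "(\<lambda>n. x - 1 / real (Suc n)) \<longlonglongrightarrow> x"
      using tendsto_diff[OF tendsto_const LIMSEQ_inverse_real_of_nat, of x] by (simp add: inverse_eq_divide)
    show "(\<lambda>n. H (x - 1 / real (Suc n))) \<longlonglongrightarrow> G x"
    proof (cases "x \<le> 0")
      case True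
      have "H (x - 1 / real (Suc n)) = F 0" for n
      proof -
        have "x - 1 / real (Suc n) \<le> 0" using True by (smt (verit) divide_pos_pos of_nat_0_less_iff zero_less_Suc)
        then show ?thesis using t by (simp add: H_def min.absorb2 max.absorb1)
      qed
      then show ?thesis using True by (simp add: G_def)
    next
      case False
      show ?thesis
      proof (cases "x \<le> t")
        case False2: False
        obtain N where N: "1 / real (Suc N) < x - t"
          using reals_Archimedean[of "x - t"] False2 by (auto simp: inverse_eq_divide)
        have "\<forall>\<^sub>F n in sequentially. H (x - 1 / real (Suc n)) = F t"
          unfolding eventually_sequentially
        proof (intro exI allI impI)
          fix n assume "N \<le> n"
          then have "1 / real (Suc n) \<le> 1 / real (Suc N)" by (simp add: frac_le)
          then have "t \<le> x - 1 / real (Suc n)" using N by simp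
          then show "H (x - 1 / real (Suc n)) = F t" using t by (simp add: H_def min.absorb1 max.absorb2)
        qed
        then show ?thesis using False False2 by (simp add: G_def tendsto_eventually)
      next
        case True
        have "x \<in> {0<..t}" using False True by simp
        then obtain L where L: "(F \<longlongrightarrow> L) (at_left x)" using ll by blast
        have GL: "G x = L" using False True L by (simp add: G_def tendsto_Lim)
        have fl: "filterlim (\<lambda>n. x - 1 / real (Suc n)) (at_left x) sequentially"
          by (rule tendsto_imp_filterlim_at_left[OF sx]) simp
        then have FL: "(\<lambda>n. F (x - 1 / real (Suc n))) \<longlonglongrightarrow> L"
          using filterlim_compose[OF L fl] by (simp add: o_def)
        obtain N where N: "1 / real (Suc N) < x"
          using reals_Archimedean[of "x"] False by (auto simp: inverse_eq_divide)
        have "\<forall>\<^sub>F n in sequentially. F (x - 1 / real (Suc n)) = H (x - 1 / real (Suc n))"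
          unfolding eventually_sequentially
        proof (intro exI allI impI)
          fix n assume "N \<le> n"
          then have "1 / real (Suc n) \<le> 1 / real (Suc N)" by (simp add: frac_le)
          then have "0 \<le> x - 1 / real (Suc n)" using N by simp
          moreover have "x - 1 / real (Suc n) \<le> t" using True by (smt (verit) divide_pos_pos of_nat_0_less_iff zero_less_Suc)
          ultimately show "F (x - 1 / real (Suc n)) = H (x - 1 / real (Suc n))" by (simp add: H_def min.absorb2 max.absorb2)
        qed
        then show ?thesis using Lim_transform_eventually[OF FL] GL by simp
      qed
    qed
  qed
  moreover have "\<forall>x\<in>{0..t}. G x = leftlim F x"
    by (auto simp: G_def leftlim_def)
  ultimately show ?thesis by blast
qed

lemma compact_loc_bdd:
  fixes F :: "real \<Rightarrow> real"
  assumes S: "compact S" and loc: "\<And>x. x \<in> S \<Longrightarrow> \<exists>e>0. \<exists>K. \<forall>y\<in>S. dist y x < e \<longrightarrow> \<bar>F y\<bar> \<le> K"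
  shows "\<exists>K. \<forall>y\<in>S. \<bar>F y\<bar> \<le> K"
proof -
  obtain e K where eK: "\<And>x. x \<in> S \<Longrightarrow> e x > 0 \<and> (\<forall>y\<in>S. dist y x < e x \<longrightarrow> \<bar>F y\<bar> \<le> K x)"
    using loc by metis
  have "S \<subseteq> (\<Union>x\<in>S. ball x (e x))" using eK by force
  then obtain T where T: "T \<subseteq> S" "finite T" "S \<subseteq> (\<Union>x\<in>T. ball x (e x))"
    using compactE_image[OF S, of S "\<lambda>x. ball x (e x)"] by auto
  show ?thesis
  proof (intro exI ballI)
    fix y assume y: "y \<in> S"
    then obtain x where x: "x \<in> T" "y \<in> ball x (e x)" using T by auto
    then have "\<bar>F y\<bar> \<le> K x" using eK[of x] T y by (auto simp: dist_commute)
    also have "K x \<le> Max (insert 0 (K ` T))" using T x by (intro Max_ge) auto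
    finally show "\<bar>F y\<bar> \<le> Max (insert 0 (K ` T))" .
  qed
qed

lemma cadlag_bdd:
  fixes F :: "real \<Rightarrow> real"
  assumes t: "0 < t" and c: "cadlag_on t F"
  shows "\<exists>K. \<forall>y\<in>{0..t}. \<bar>F y\<bar> \<le> K \<and> \<bar>leftlim F y\<bar> \<le> K"
proof -
  from c have rc: "\<forall>x\<in>{0..<t}. (F \<longlongrightarrow> F x) (at_right x)"
    and ll: "\<forall>x\<in>{0<..t}. \<exists>L. (F \<longlongrightarrow> L) (at_left x)" by (auto simp: cadlag_on_def)
  have "\<exists>K. \<forall>y\<in>{0..t}. \<bar>F y\<bar> \<le> K"
  proof (rule compact_loc_bdd)
    fix x assume x: "x \<in> {0..t}"
    obtain br Kr where br: "br > x" "\<forall>y\<in>{0..t}. x < y \<and> y < br \<longrightarrow> \<bar>F y\<bar> \<le> Kr"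
    proof (cases "x < t")
      case True
      then have "x \<in> {0..<t}" using x by simp
      then have T: "(F \<longlongrightarrow> F x) (at_right x)" using rc by blast
      have "\<forall>\<^sub>F y in at_right x. dist (F y) (F x) < 1"
        using T[unfolded tendsto_iff, rule_format, of 1] by simp
      then obtain b where "b > x" "\<forall>y>x. y < b \<longrightarrow> dist (F y) (F x) < 1"
        by (auto simp: eventually_at_right_field)
      moreover have "dist (F y) (F x) < 1 \<Longrightarrow> \<bar>F y\<bar> \<le> \<bar>F x\<bar> + 1" for y
        by (simp add: dist_real_def)
      ultimately show ?thesis using that[of b "\<bar>F x\<bar> + 1"] by force
    next
      case False
      then show ?thesis using that[of "x+1" 0] x by auto
    qed
    obtain bl Kl where bl: "bl < x" "\<forall>y\<in>{0..t}. bl < y \<and> y < x \<longrightarrow> \<bar>F y\<bar> \<le> Kl"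
    proof (cases "0 < x")
      case True
      then have "x \<in> {0<..t}" using x by simp
      then obtain L where "(F \<longlongrightarrow> L) (at_left x)" using ll by blast
      then have "\<forall>\<^sub>F y in at_left x. dist (F y) L < 1"
        unfolding tendsto_iff by (metis zero_less_one)
      then obtain b where "b < x" "\<forall>y>b. y < x \<longrightarrow> dist (F y) L < 1"
        by (auto simp: eventually_at_left_field)
      moreover have "dist (F y) L < 1 \<Longrightarrow> \<bar>F y\<bar> \<le> \<bar>L\<bar> + 1" for y
        by (simp add: dist_real_def)
      ultimately show ?thesis using that[of b "\<bar>L\<bar> + 1"] by force
    next
      case False
      then show ?thesis using that[of "x-1" 0] x by auto
    qed
    show "\<exists>e>0. \<exists>K. \<forall>y\<in>{0..t}. dist y x < e \<longrightarrow> \<bar>F y\<bar> \<le> K"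
    proof (intro exI conjI ballI impI)
      show "0 < min (br - x) (x - bl)" using br bl by simp
      fix y assume y: "y \<in> {0..t}" "dist y x < min (br - x) (x - bl)"
      show "\<bar>F y\<bar> \<le> max \<bar>F x\<bar> (max Kr Kl)"
      proof (cases "y = x")
        case True then show ?thesis by simp
      next
        case False
        show ?thesis
        proof (cases "x < y")
          case True
          then have "\<bar>F y\<bar> \<le> Kr" using br y by (auto simp: dist_real_def)
          then show ?thesis by simp
        next
          case False2: False
          then have "\<bar>F y\<bar> \<le> Kl" using bl y False by (auto simp: dist_real_def)
          then show ?thesis by simp
        qed
      qed
    qed
  qed simp
  then obtain K where K: "\<forall>y\<in>{0..t}. \<bar>F y\<bar> \<le> K" by blast
  have "\<bar>leftlim F y\<bar> \<le> K" if y: "y \<in> {0..t}" for y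
  proof (cases "y \<le> 0")
    case True then show ?thesis using K t by (simp add: leftlim_def)
  next
    case False
    have "y \<in> {0<..t}" using y False by simp
    then obtain L where L: "(F \<longlongrightarrow> L) (at_left y)" using ll by blast
    have "leftlim F y = L" using False L by (simp add: leftlim_def tendsto_Lim)
    moreover have "\<bar>L\<bar> \<le> K"
    proof (rule tendsto_upperbound[OF tendsto_rabs[OF L]])
      show "\<forall>\<^sub>F x in at_left y. \<bar>F x\<bar> \<le> K"
        unfolding eventually_at_left_field using False y K by (intro exI[of _ 0]) auto
    qed simp
    ultimately show ?thesis by simp
  qed
  then show ?thesis using K by blast
qed

definition smeas :: "real set \<Rightarrow> (real \<Rightarrow> real) \<Rightarrow> bool" where
  "smeas A f \<longleftrightarrow> (\<exists>G\<in>borel_measurable borel. \<forall>x\<in>A. f x = G x)"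

lemma smeas_iff:
  assumes A: "A \<in> sets borel"
  shows "set_borel_measurable lborel A f \<longleftrightarrow> smeas A f"
proof
  assume "set_borel_measurable lborel A f"
  then have "(\<lambda>x. indicator A x * f x) \<in> borel_measurable borel"
    by (simp add: set_borel_measurable_def)
  then show "smeas A f" unfolding smeas_def by (intro bexI[of _ "\<lambda>x. indicator A x * f x"]) auto
next
  assume "smeas A f"
  then obtain G where G[measurable]: "G \<in> borel_measurable borel" "\<forall>x\<in>A. f x = G x" by (auto simp: smeas_def)
  have [measurable]: "A \<in> sets borel" using A .
  have "(\<lambda>x. indicator A x *\<^sub>R f x) = (\<lambda>x. indicator A x * G x)"
    using G(2) by (auto split: split_indicator)
  moreover have "(\<lambda>x. indicator A x * G x) \<in> borel_measurable borel" by measurable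
  ultimately show "set_borel_measurable lborel A f" by (simp add: set_borel_measurable_def)
qed

lemma smeas_sint_iff: "set_borel_measurable lborel {a..b::real} f \<longleftrightarrow> smeas {a..b} f"
  by (rule smeas_iff) simp

lemma smeasI: "G \<in> borel_measurable borel \<Longrightarrow> (\<And>x. x \<in> A \<Longrightarrow> f x = G x) \<Longrightarrow> smeas A f"
  unfolding smeas_def by blast

lemma smeasE:
  assumes "smeas A f"
  obtains G where "G \<in> borel_measurable borel" "\<And>x. x \<in> A \<Longrightarrow> f x = G x"
  using assms unfolding smeas_def by blast

lemma smeas_mono: "smeas A f \<Longrightarrow> B \<subseteq> A \<Longrightarrow> smeas B f"
  unfolding smeas_def by blast

lemma sint_dom:
  fixes f g :: "real \<Rightarrow> real"
  assumes g: "set_integrable lborel A g" and f: "smeas A f" and A: "A \<in> sets borel"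
    and b: "\<And>x. x \<in> A \<Longrightarrow> \<bar>f x\<bar> \<le> g x"
  shows "set_integrable lborel A f"
proof -
  have gi: "integrable lborel (\<lambda>x. indicator A x *\<^sub>R g x)" using g by (simp add: set_integrable_def)
  have fm: "set_borel_measurable lborel A f" using smeas_iff[OF A] f by simp
  show ?thesis unfolding set_integrable_def
  proof (rule Bochner_Integration.integrable_bound[OF gi])
    show "(\<lambda>x. indicat_real A x *\<^sub>R f x) \<in> borel_measurable lborel"
      using fm by (simp add: set_borel_measurable_def)
    show "AE x in lborel. norm (indicat_real A x *\<^sub>R f x) \<le> norm (indicat_real A x *\<^sub>R g x)"
    proof (intro AE_I2)
      fix x show "norm (indicat_real A x *\<^sub>R f x) \<le> norm (indicat_real A x *\<^sub>R g x)"
      proof (cases "x \<in> A")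
        case True then show ?thesis using b[of x] by simp
      qed simp
    qed
  qed
qed

lemma sint_cong_AE:
  fixes f g :: "real \<Rightarrow> real"
  assumes A: "A \<in> sets borel" and f: "smeas A f" and g: "smeas A g"
    and ae: "AE x in lborel. x \<in> A \<longrightarrow> f x = g x"
  shows "(LBINT x:A. f x) = (LBINT x:A. g x)"
proof -
  have fm: "(\<lambda>x. indicator A x *\<^sub>R f x) \<in> borel_measurable lborel"
    using smeas_iff[OF A] f by (simp add: set_borel_measurable_def)
  have gm: "(\<lambda>x. indicator A x *\<^sub>R g x) \<in> borel_measurable lborel"
    using smeas_iff[OF A] g by (simp add: set_borel_measurable_def)
  have "AE x in lborel. indicator A x *\<^sub>R f x = indicator A x *\<^sub>R g x"
    using ae by (rule eventually_mono) (auto split: split_indicator)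
  then show ?thesis unfolding set_lebesgue_integral_def
    using fm gm by (intro integral_cong_AE) auto
qed

lemma sint_subset_le:
  fixes g :: "real \<Rightarrow> real"
  assumes g: "set_integrable lborel {a..b} g" and nn: "\<And>x. x \<in> {a..b} \<Longrightarrow> 0 \<le> g x"
    and sub: "a \<le> x" "x \<le> b"
  shows "(LBINT u:{a..x}. g u) \<le> (LBINT u:{a..b}. g u)"
proof -
  have gx: "set_integrable lborel {a..x} g"
    by (rule set_integrable_subset[OF g]) (use sub in auto)
  show ?thesis
    using g gx nn sub unfolding set_lebesgue_integral_def set_integrable_def
    by (intro integral_mono) (auto split: split_indicator)
qed

lemma sq_int_lin:
  fixes u v :: "real \<Rightarrow> real"
  assumes mu: "smeas {0..t} u" and mv: "smeas {0..t} v"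
    and iu: "set_integrable lborel {0..t} (\<lambda>x. (u x)^2)" and iv: "set_integrable lborel {0..t} (\<lambda>x. (v x)^2)"
  shows "set_integrable lborel {0..t} (\<lambda>x. (a * u x + b * v x)^2)"
proof (rule sint_dom)
  show "set_integrable lborel {0..t} (\<lambda>x. 2 * a^2 * (u x)^2 + 2 * b^2 * (v x)^2)"
    using iu iv by (intro set_integral_add(1) set_integrable_mult_right) auto
  obtain U where U[measurable]: "U \<in> borel_measurable borel" "\<And>x. x \<in> {0..t} \<Longrightarrow> u x = U x" using mu unfolding smeas_def by blast
  obtain V where V[measurable]: "V \<in> borel_measurable borel" "\<And>x. x \<in> {0..t} \<Longrightarrow> v x = V x" using mv unfolding smeas_def by blast
  show "smeas {0..t} (\<lambda>x. (a * u x + b * v x)^2)"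
    by (rule smeasI[where G="\<lambda>x. (a * U x + b * V x)^2"]) (auto simp: U V)
  fix x
  have "0 \<le> (a * u x - b * v x)^2" by simp
  then have "(a * u x + b * v x)^2 \<le> 2 * a^2 * (u x)^2 + 2 * b^2 * (v x)^2"
    by (simp add: power2_eq_square algebra_simps)
  then show "\<bar>(a * u x + b * v x)^2\<bar> \<le> 2 * a^2 * (u x)^2 + 2 * b^2 * (v x)^2"
    by simp
qed simp

lemma sob_derivs_props:
  assumes d: "sob_derivs m t h d"
  shows "\<And>x. x \<in> {0..t} \<Longrightarrow> d 0 x = h x"
    and "\<And>k. k \<le> m \<Longrightarrow> smeas {0..t} (d k)"
    and "\<And>k. k \<le> m \<Longrightarrow> set_integrable lborel {0..t} (\<lambda>x. (d k x)^2)"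
    and "\<And>k. k \<le> m \<Longrightarrow> set_integrable lborel {0..t} (d k)"
    and "\<And>k x. k < m \<Longrightarrow> x \<in> {0..t} \<Longrightarrow> d k x = d k 0 + (LBINT u:{0..x}. d (Suc k) u)"
proof -
  have A: "\<forall>k\<le>m. set_borel_measurable lborel {0..t} (d k) \<and> set_integrable lborel {0..t} (\<lambda>x. (d k x)^2)"
    and B: "\<forall>x\<in>{0..t}. d 0 x = h x"
    and C: "\<forall>k<m. \<forall>x\<in>{0..t}. d k x = d k 0 + (LBINT u:{0..x}. d (Suc k) u)"
    using d unfolding sob_derivs_def by blast+
  show "\<And>x. x \<in> {0..t} \<Longrightarrow> d 0 x = h x" using B by blast
  show "\<And>k. k \<le> m \<Longrightarrow> smeas {0..t} (d k)" using A by (simp add: smeas_sint_iff[symmetric])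
  show "\<And>k. k \<le> m \<Longrightarrow> set_integrable lborel {0..t} (\<lambda>x. (d k x)^2)" using A by blast
  show "\<And>k. k \<le> m \<Longrightarrow> set_integrable lborel {0..t} (d k)" using A sint_sq by blast
  show "\<And>k x. k < m \<Longrightarrow> x \<in> {0..t} \<Longrightarrow> d k x = d k 0 + (LBINT u:{0..x}. d (Suc k) u)" using C by blast
qed

lemma sob_derivs_lin:
  assumes df: "sob_derivs m t f df" and dg: "sob_derivs m t g dg"
  shows "sob_derivs m t (\<lambda>x. a * f x + b * g x) (\<lambda>k x. a * df k x + b * dg k x)"
  unfolding sob_derivs_def
proof (intro conjI ballI allI impI)
  note F = sob_derivs_props[OF df] and G = sob_derivs_props[OF dg]
  fix x :: real assume "x \<in> {0..t}"
  then show "a * df 0 x + b * dg 0 x = a * f x + b * g x" using F(1) G(1) by simp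
next
  note F = sob_derivs_props[OF df] and G = sob_derivs_props[OF dg]
  fix k assume k: "k \<le> m"
  obtain U where U[measurable]: "U \<in> borel_measurable borel" "\<And>x. x \<in> {0..t} \<Longrightarrow> df k x = U x" using F(2)[OF k] unfolding smeas_def by blast
  obtain V where V[measurable]: "V \<in> borel_measurable borel" "\<And>x. x \<in> {0..t} \<Longrightarrow> dg k x = V x" using G(2)[OF k] unfolding smeas_def by blast
  have "smeas {0..t} (\<lambda>x. a * df k x + b * dg k x)"
    by (rule smeasI[where G="\<lambda>x. a * U x + b * V x"]) (auto simp: U V)
  then show "set_borel_measurable lborel {0..t} (\<lambda>x. a * df k x + b * dg k x)"
    by (simp add: smeas_sint_iff)
  show "set_integrable lborel {0..t} (\<lambda>x. (a * df k x + b * dg k x)\<^sup>2)"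
    by (rule sq_int_lin[OF F(2)[OF k] G(2)[OF k] F(3)[OF k] G(3)[OF k]])
next
  note F = sob_derivs_props[OF df] and G = sob_derivs_props[OF dg]
  fix k x assume k: "k < m" and x: "x \<in> {0..t}"
  have k': "Suc k \<le> m" using k by simp
  have i1: "set_integrable lborel {0..x} (df (Suc k))"
    by (rule set_integrable_subset[OF F(4)[OF k']]) (use x in auto)
  have i2: "set_integrable lborel {0..x} (dg (Suc k))"
    by (rule set_integrable_subset[OF G(4)[OF k']]) (use x in auto)
  have "(LBINT u:{0..x}. a * df (Suc k) u + b * dg (Suc k) u) = a * (LBINT u:{0..x}. df (Suc k) u) + b * (LBINT u:{0..x}. dg (Suc k) u)"
    using i1 i2 by (subst set_integral_add(2)) auto
  then show "a * df k x + b * dg k x = a * df k 0 + b * dg k 0 + (LBINT u:{0..x}. a * df (Suc k) u + b * dg (Suc k) u)"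
    using F(5)[OF k x] G(5)[OF k x] by (simp add: algebra_simps)
qed

lemma sobolev_lin:
  assumes "f \<in> sobolev_space m t" "g \<in> sobolev_space m t"
  shows "(\<lambda>x. a * f x + b * g x) \<in> sobolev_space m t"
  using assms sob_derivs_lin unfolding sobolev_space_def by fastforce

lemma sobolev_wit:
  assumes "f \<in> sobolev_space m t"
  obtains d where "sob_derivs m t f d"
  using assms unfolding sobolev_space_def by blast

lemma sobolev_zero_out: "f \<in> sobolev_space m t \<Longrightarrow> x \<notin> {0..t} \<Longrightarrow> f x = 0"
  unfolding sobolev_space_def by blast

lemma sqnorm_nonneg: "0 \<le> sob_sqnorm m t d"
  unfolding sob_sqnorm_def by (intro sum_nonneg sint_nonneg) simp

lemma sqnorm_ge: "k \<le> m \<Longrightarrow> (LBINT x:{0..t}. (d k x)^2) \<le> sob_sqnorm m t d"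
  unfolding sob_sqnorm_def
  by (rule member_le_sum[where f="\<lambda>k. LBINT x:{0..t}. (d k x)^2"]) (auto intro: sint_nonneg)

locale sobip =
  fixes m :: nat and t :: real and ip :: "(real \<Rightarrow> real) \<Rightarrow> (real \<Rightarrow> real) \<Rightarrow> real"
  assumes t_pos: "0 < t" and m_pos: "1 \<le> m" and ipA: "sobolev_ip m t ip"
begin

abbreviation "S \<equiv> sobolev_space m t"

lemma ip_sym: "f \<in> S \<Longrightarrow> g \<in> S \<Longrightarrow> ip f g = ip g f"
  using ipA unfolding sobolev_ip_def by blast

lemma ip_lin: "f \<in> S \<Longrightarrow> g \<in> S \<Longrightarrow> h \<in> S \<Longrightarrow> ip (\<lambda>x. a * f x + b * g x) h = a * ip f h + b * ip g h"
  using ipA unfolding sobolev_ip_def by blast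

lemma ip_lin2:
  assumes f: "f \<in> S" and g: "g \<in> S" and h: "h \<in> S"
  shows "ip h (\<lambda>x. a * f x + b * g x) = a * ip h f + b * ip h g"
proof -
  have "ip h (\<lambda>x. a * f x + b * g x) = ip (\<lambda>x. a * f x + b * g x) h"
    by (rule ip_sym[OF h sobolev_lin[OF f g]])
  also have "\<dots> = a * ip f h + b * ip g h" by (rule ip_lin[OF f g h])
  finally show ?thesis using ip_sym[OF f h] ip_sym[OF g h] by simp
qed

lemma ip_lower: "\<exists>c>0. \<forall>h\<in>S. \<forall>d. sob_derivs m t h d \<longrightarrow> c * sob_sqnorm m t d \<le> ip h h"
  using ipA unfolding sobolev_ip_def by blast

lemma ip_nonneg: "f \<in> S \<Longrightarrow> 0 \<le> ip f f"
proof -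
  assume f: "f \<in> S"
  obtain c where c: "c > 0" "\<forall>h\<in>S. \<forall>d. sob_derivs m t h d \<longrightarrow> c * sob_sqnorm m t d \<le> ip h h"
    using ip_lower by blast
  obtain d where d: "sob_derivs m t f d" using f by (rule sobolev_wit)
  have "0 \<le> c * sob_sqnorm m t d" using c sqnorm_nonneg by simp
  also have "\<dots> \<le> ip f f" using c f d by blast
  finally show ?thesis .
qed

lemma ip_quad:
  assumes f: "f \<in> S" and g: "g \<in> S"
  shows "ip (\<lambda>x. f x - l * g x) (\<lambda>x. f x - l * g x) = ip f f - 2 * l * ip f g + l^2 * ip g g"
proof -
  have e: "(\<lambda>x. f x - l * g x) = (\<lambda>x. 1 * f x + (-l) * g x)" by simp
  have fg: "(\<lambda>x. 1 * f x + (-l) * g x) \<in> S" using sobolev_lin[OF f g] .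
  have "ip (\<lambda>x. 1 * f x + (-l) * g x) (\<lambda>x. 1 * f x + (-l) * g x)
      = 1 * ip f (\<lambda>x. 1 * f x + (-l) * g x) + (-l) * ip g (\<lambda>x. 1 * f x + (-l) * g x)"
    using ip_lin[OF f g fg] .
  also have "\<dots> = ip f f - l * ip f g - l * (ip g f - l * ip g g)"
    using ip_lin2[OF f g f, of 1 "-l"] ip_lin2[OF f g g, of 1 "-l"] by simp
  finally show ?thesis unfolding e using ip_sym[OF f g] by (simp add: power2_eq_square algebra_simps)
qed

lemma ip_cs: assumes f: "f \<in> S" and g: "g \<in> S"
  shows "\<bar>ip f g\<bar> \<le> sqrt (ip f f) * sqrt (ip g g)"
proof -
  have q: "0 \<le> ip f f - 2 * l * ip f g + l^2 * ip g g" for l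
    using ip_quad[OF f g, of l] ip_nonneg[OF sobolev_lin[OF f g, of 1 "-l"]] by simp
  have ff: "0 \<le> ip f f" and gg: "0 \<le> ip g g" using ip_nonneg f g by auto
  have "(ip f g)^2 \<le> ip f f * ip g g"
  proof (cases "ip g g = 0")
    case True
    have "ip f g = 0"
    proof (rule ccontr)
      assume ne: "ip f g \<noteq> 0"
      have "0 \<le> ip f f - 2 * ((ip f f + 1) / (2 * ip f g)) * ip f g"
        using q[of "(ip f f + 1) / (2 * ip f g)"] True by simp
      then show False using ne by (simp add: field_simps)
    qed
    then show ?thesis using True by simp
  next
    case False
    then have gp: "0 < ip g g" using gg by simp
    have "0 \<le> ip f f - 2 * (ip f g / ip g g) * ip f g + (ip f g / ip g g)^2 * ip g g"
      using q by blast
    also have "\<dots> = ip f f - (ip f g)^2 / ip g g"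
      using gp by (simp add: power2_eq_square field_simps)
    finally have "(ip f g)^2 / ip g g \<le> ip f f" by simp
    then show ?thesis using gp by (simp add: field_simps)
  qed
  then have "sqrt ((ip f g)^2) \<le> sqrt (ip f f * ip g g)" by (rule real_sqrt_le_mono)
  then show ?thesis by (simp add: real_sqrt_mult)
qed

lemma ip_tri:
  assumes f: "f \<in> S" and g: "g \<in> S"
  shows "sqrt (ip (\<lambda>x. f x + g x) (\<lambda>x. f x + g x)) \<le> sqrt (ip f f) + sqrt (ip g g)"
proof -
  have e: "(\<lambda>x. f x + g x) = (\<lambda>x. f x - (-1) * g x)" by simp
  have "ip (\<lambda>x. f x + g x) (\<lambda>x. f x + g x) = ip f f + 2 * ip f g + ip g g"
    unfolding e using ip_quad[OF f g, of "-1"] by simp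
  also have "\<dots> \<le> (sqrt (ip f f) + sqrt (ip g g))^2"
    using ip_cs[OF f g] ip_nonneg[OF f] ip_nonneg[OF g] by (simp add: power2_eq_square algebra_simps)
  finally show ?thesis
    using ip_nonneg[OF f] ip_nonneg[OF g] real_sqrt_le_mono by fastforce
qed

end

context sobip
begin

lemma sob_f_eq:
  assumes d: "sob_derivs m t f d" and z: "z \<in> {0..t}"
  shows "f z = d 0 0 + (LBINT u:{0..z}. d 1 u)"
proof -
  note F = sob_derivs_props[OF d]
  have "d 0 z = d 0 0 + (LBINT u:{0..z}. d (Suc 0) u)" using F(5)[of 0 z] m_pos z by simp
  then show ?thesis using F(1)[OF z] by simp
qed

lemma sob_d1_int: "sob_derivs m t f d \<Longrightarrow> set_integrable lborel {0..t} (d 1)"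
  using sob_derivs_props(4)[of m t f d 1] m_pos by simp

lemma sob_pointwise:
  assumes d: "sob_derivs m t f d" and x: "x \<in> {0..t}" and y: "y \<in> {0..t}"
  shows "\<bar>f x - f y\<bar> \<le> 2 * (LBINT u:{0..t}. \<bar>d 1 u\<bar>)"
proof -
  have i1: "set_integrable lborel {0..t} (d 1)" using sob_d1_int[OF d] .
  have bnd: "\<bar>LBINT u:{0..z}. d 1 u\<bar> \<le> (LBINT u:{0..t}. \<bar>d 1 u\<bar>)" if z: "z \<in> {0..t}" for z
  proof -
    have iz: "set_integrable lborel {0..z} (d 1)" by (rule set_integrable_subset[OF i1]) (use z in auto)
    have "\<bar>LBINT u:{0..z}. d 1 u\<bar> \<le> (LBINT u:{0..z}. \<bar>d 1 u\<bar>)" using set_integral_norm_bound[OF iz] by simp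
    also have "\<dots> \<le> (LBINT u:{0..t}. \<bar>d 1 u\<bar>)"
      by (rule sint_subset_le) (use set_integrable_abs[OF i1] z in auto)
    finally show ?thesis .
  qed
  show ?thesis using sob_f_eq[OF d x] sob_f_eq[OF d y] bnd[OF x] bnd[OF y] by linarith
qed

lemma sob_L1:
  assumes d: "sob_derivs m t f d" and k: "k \<le> m"
  shows "(LBINT u:{0..t}. \<bar>d k u\<bar>) \<le> sqrt t * sqrt (sob_sqnorm m t d)"
proof -
  note F = sob_derivs_props[OF d]
  have "(LBINT u:{0..t}. \<bar>d k u\<bar>) \<le> sqrt (t * (LBINT x:{0..t}. (d k x)^2))"
    using sint_abs_sq[OF t_pos _ F(3)[OF k]] F(2)[OF k] by (simp add: smeas_sint_iff)
  also have "\<dots> \<le> sqrt (t * sob_sqnorm m t d)"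
    using sqnorm_ge[OF k, of t d] t_pos by simp
  finally show ?thesis by (simp add: real_sqrt_mult)
qed

lemma sob_sup:
  assumes d: "sob_derivs m t f d" and x: "x \<in> {0..t}"
  shows "\<bar>f x\<bar> \<le> (1 / sqrt t + 2 * sqrt t) * sqrt (sob_sqnorm m t d)"
proof -
  note F = sob_derivs_props[OF d]
  define A1 where "A1 = (LBINT u:{0..t}. \<bar>d 1 u\<bar>)"
  define A0 where "A0 = (LBINT u:{0..t}. \<bar>d 0 u\<bar>)"
  define s where "s = sqrt (sob_sqnorm m t d)"
  have pt: "\<bar>f x\<bar> \<le> \<bar>d 0 y\<bar> + 2 * A1" if y: "y \<in> {0..t}" for y
    using sob_pointwise[OF d x y] F(1)[OF y] unfolding A1_def by linarith
  have i0: "set_integrable lborel {0..t} (\<lambda>y. \<bar>d 0 y\<bar>)" using F(4)[of 0] by (simp add: set_integrable_abs)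
  have "t * \<bar>f x\<bar> = (LBINT y:{0..t}. \<bar>f x\<bar>)"
    using t_pos by (simp add: set_integral_const)
  also have "\<dots> \<le> (LBINT y:{0..t}. \<bar>d 0 y\<bar> + 2 * A1)"
    using pt i0 by (intro set_integral_mono) (auto intro: sint_const)
  also have "\<dots> = A0 + 2 * A1 * t"
    using i0 t_pos by (subst set_integral_add(2)) (auto intro: sint_const simp: set_integral_const A0_def)
  finally have tf: "t * \<bar>f x\<bar> \<le> A0 + 2 * A1 * t" .
  have a0: "A0 \<le> sqrt t * s" unfolding A0_def s_def using sob_L1[OF d, of 0] by simp
  have a1: "A1 \<le> sqrt t * s" unfolding A1_def s_def using sob_L1[OF d, of 1] m_pos by simp
  have "t * \<bar>f x\<bar> \<le> sqrt t * s + 2 * (sqrt t * s) * t"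
    using tf a0 a1 t_pos by (smt (verit) mult_right_mono)
  then have "\<bar>f x\<bar> \<le> (sqrt t * s + 2 * (sqrt t * s) * t) / t"
    using t_pos by (simp add: field_simps)
  also have "\<dots> = (1 / sqrt t + 2 * sqrt t) * s"
    using t_pos by (simp add: field_simps)
  finally show ?thesis unfolding s_def .
qed

lemma embed: "\<exists>Ke\<ge>0. \<forall>f\<in>S. \<forall>x. \<bar>f x\<bar> \<le> Ke * sqrt (ip f f)"
proof -
  obtain c where c: "c > 0" "\<forall>h\<in>S. \<forall>d. sob_derivs m t h d \<longrightarrow> c * sob_sqnorm m t d \<le> ip h h"
    using ip_lower by blast
  define Ke where "Ke = (1 / sqrt t + 2 * sqrt t) / sqrt c"
  have Ke0: "Ke \<ge> 0" using t_pos c by (simp add: Ke_def)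
  have "\<bar>f x\<bar> \<le> Ke * sqrt (ip f f)" if f: "f \<in> S" for f x
  proof (cases "x \<in> {0..t}")
    case False then show ?thesis using sobolev_zero_out[OF f False] Ke0 ip_nonneg[OF f] by simp
  next
    case True
    obtain d where d: "sob_derivs m t f d" using f by (rule sobolev_wit)
    have "sob_sqnorm m t d \<le> ip f f / c" using c f d by (simp add: field_simps mult.commute)
    then have s: "sqrt (sob_sqnorm m t d) \<le> sqrt (ip f f) / sqrt c"
      by (metis real_sqrt_divide real_sqrt_le_mono)
    have "\<bar>f x\<bar> \<le> (1 / sqrt t + 2 * sqrt t) * sqrt (sob_sqnorm m t d)" using sob_sup[OF d True] .
    also have "\<dots> \<le> (1 / sqrt t + 2 * sqrt t) * (sqrt (ip f f) / sqrt c)"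
      using s t_pos by (intro mult_left_mono) auto
    finally show ?thesis by (simp add: Ke_def)
  qed
  then show ?thesis using Ke0 by blast
qed

lemma L1_bound: "\<exists>Kw\<ge>0. \<forall>f\<in>S. \<forall>d. sob_derivs m t f d \<longrightarrow> (LBINT u:{0..t}. \<bar>d 1 u\<bar>) \<le> Kw * sqrt (ip f f)"
proof -
  obtain c where c: "c > 0" "\<forall>h\<in>S. \<forall>d. sob_derivs m t h d \<longrightarrow> c * sob_sqnorm m t d \<le> ip h h"
    using ip_lower by blast
  define Kw where "Kw = sqrt t / sqrt c"
  have "(LBINT u:{0..t}. \<bar>d 1 u\<bar>) \<le> Kw * sqrt (ip f f)" if f: "f \<in> S" and d: "sob_derivs m t f d" for f d
  proof -
    have "sob_sqnorm m t d \<le> ip f f / c" using c f d by (simp add: field_simps mult.commute)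
    then have s: "sqrt (sob_sqnorm m t d) \<le> sqrt (ip f f) / sqrt c"
      by (metis real_sqrt_divide real_sqrt_le_mono)
    have "(LBINT u:{0..t}. \<bar>d 1 u\<bar>) \<le> sqrt t * sqrt (sob_sqnorm m t d)" using sob_L1[OF d] m_pos by simp
    also have "\<dots> \<le> sqrt t * (sqrt (ip f f) / sqrt c)" using s t_pos by (intro mult_left_mono) auto
    finally show ?thesis by (simp add: Kw_def)
  qed
  moreover have "Kw \<ge> 0" using t_pos c by (simp add: Kw_def)
  ultimately show ?thesis by blast
qed

lemma ip_zero_imp:
  assumes f: "f \<in> S" and z: "ip f f = 0"
  shows "f = (\<lambda>x. 0)"
proof
  fix x
  obtain Ke where "Ke \<ge> 0" "\<forall>f\<in>S. \<forall>x. \<bar>f x\<bar> \<le> Ke * sqrt (ip f f)" using embed by blast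
  then show "f x = 0" using f z by force
qed

end

context sobip
begin

lemma wderiv_props:
  assumes f: "f \<in> S"
  shows "smeas {0..t} (wderiv t f)" "set_integrable lborel {0..t} (wderiv t f)"
    "\<And>x. x \<in> {0..t} \<Longrightarrow> f x = f 0 + (LBINT u:{0..x}. wderiv t f u)"
proof -
  obtain d where d: "sob_derivs m t f d" using f by (rule sobolev_wit)
  note F = sob_derivs_props[OF d]
  have ex: "\<exists>g'. set_borel_measurable lborel {0..t} g' \<and> set_integrable lborel {0..t} g' \<and>
                          (\<forall>x\<in>{0..t}. f x = f 0 + (LBINT u:{0..x}. g' u))"
  proof (intro exI[of _ "d 1"] conjI ballI)
    show "set_borel_measurable lborel {0..t} (d 1)" using F(2)[of 1] m_pos by (simp add: smeas_sint_iff)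
    show "set_integrable lborel {0..t} (d 1)" using sob_d1_int[OF d] .
    fix x assume x: "x \<in> {0..t}"
    have "f 0 = d 0 0" using F(1)[of 0] t_pos by simp
    then show "f x = f 0 + (LBINT u:{0..x}. d 1 u)" using sob_f_eq[OF d x] by simp
  qed
  have "set_borel_measurable lborel {0..t} (wderiv t f) \<and> set_integrable lborel {0..t} (wderiv t f) \<and>
                          (\<forall>x\<in>{0..t}. f x = f 0 + (LBINT u:{0..x}. wderiv t f u))"
    unfolding wderiv_def by (rule someI_ex[OF ex])
  then have H1: "set_borel_measurable lborel {0..t} (wderiv t f)"
    and H2: "set_integrable lborel {0..t} (wderiv t f)"
    and H3: "\<forall>x\<in>{0..t}. f x = f 0 + (LBINT u:{0..x}. wderiv t f u)" by blast+
  show "smeas {0..t} (wderiv t f)" using H1 by (simp add: smeas_sint_iff)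
  show "set_integrable lborel {0..t} (wderiv t f)" using H2 .
  show "\<And>x. x \<in> {0..t} \<Longrightarrow> f x = f 0 + (LBINT u:{0..x}. wderiv t f u)" using H3 by blast
qed

lemma wderiv_ae:
  assumes f: "f \<in> S" and d: "sob_derivs m t f d"
  shows "AE u in lborel. u \<in> {0..t} \<longrightarrow> wderiv t f u = d 1 u"
proof -
  note W = wderiv_props[OF f]
  note F = sob_derivs_props[OF d]
  have i1: "set_integrable lborel {0..t} (d 1)" using sob_d1_int[OF d] .
  have "AE u in lborel. u \<in> {0..t} \<longrightarrow> wderiv t f u - d 1 u = 0"
  proof (rule ae_zero_intervals)
    show "0 \<le> t" using t_pos by simp
    show "set_integrable lborel {0..t} (\<lambda>u. wderiv t f u - d 1 u)" using W(2) i1 by auto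
    fix x assume x: "x \<in> {0..t}"
    have a: "set_integrable lborel {0..x} (wderiv t f)" by (rule set_integrable_subset[OF W(2)]) (use x in auto)
    have b: "set_integrable lborel {0..x} (d 1)" by (rule set_integrable_subset[OF i1]) (use x in auto)
    have "f 0 = d 0 0" using F(1)[of 0] t_pos by simp
    then show "(LBINT u:{0..x}. wderiv t f u - d 1 u) = 0"
      using a b W(3)[OF x] sob_f_eq[OF d x] by simp
  qed
  then show ?thesis by (rule eventually_mono) simp
qed

end

locale xsetup = sobip +
  fixes Z :: "real \<Rightarrow> real"
  assumes Zc: "cadlag_on t Z"
begin

lemma LZ_meas: "smeas {0..t} (leftlim Z)"
  using ll_meas[OF t_pos Zc] unfolding smeas_def by metis

lemma Z_bdd: "\<exists>K\<ge>0. \<forall>y\<in>{0..t}. \<bar>Z y\<bar> \<le> K \<and> \<bar>leftlim Z y\<bar> \<le> K"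
proof -
  obtain K where "\<forall>y\<in>{0..t}. \<bar>Z y\<bar> \<le> K \<and> \<bar>leftlim Z y\<bar> \<le> K" using cadlag_bdd[OF t_pos Zc] by blast
  moreover have "K \<ge> 0" using calculation t_pos by (meson abs_ge_zero atLeastAtMost_iff order_trans less_imp_le order_refl)
  ultimately show ?thesis by blast
qed

lemma conv_smeas:
  assumes w: "smeas {0..t} w" and s: "s \<in> {0..t}"
  shows "smeas {0..s} (\<lambda>u. leftlim Z (s - u) * w u)"
proof -
  obtain G where G[measurable]: "G \<in> borel_measurable borel" "\<And>x. x \<in> {0..t} \<Longrightarrow> leftlim Z x = G x"
    using LZ_meas unfolding smeas_def by blast
  obtain W where W[measurable]: "W \<in> borel_measurable borel" "\<And>x. x \<in> {0..t} \<Longrightarrow> w x = W x"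
    using w unfolding smeas_def by blast
  show ?thesis
    by (rule smeasI[where G="\<lambda>u. G (s - u) * W u"]) (use s in \<open>auto simp: G W\<close>)
qed

lemma conv_int:
  assumes w: "smeas {0..t} w" and wi: "set_integrable lborel {0..t} w" and s: "s \<in> {0..t}"
  shows "set_integrable lborel {0..s} (\<lambda>u. leftlim Z (s - u) * w u)"
proof -
  obtain K where K: "K \<ge> 0" "\<forall>y\<in>{0..t}. \<bar>Z y\<bar> \<le> K \<and> \<bar>leftlim Z y\<bar> \<le> K" using Z_bdd by blast
  show ?thesis
  proof (rule sint_dom)
    show "set_integrable lborel {0..s} (\<lambda>u. K * \<bar>w u\<bar>)"
      by (intro set_integrable_mult_right set_integrable_abs set_integrable_subset[OF wi]) (use s in auto)
    show "smeas {0..s} (\<lambda>u. leftlim Z (s - u) * w u)" by (rule conv_smeas[OF w s])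
    fix u assume u: "u \<in> {0..s}"
    then have "\<bar>leftlim Z (s - u)\<bar> \<le> K" using K s by auto
    then show "\<bar>leftlim Z (s - u) * w u\<bar> \<le> K * \<bar>w u\<bar>"
      by (simp add: abs_mult mult_right_mono)
  qed simp
qed

lemma X_formula:
  assumes f: "f \<in> S" and d: "sob_derivs m t f d" and s: "s \<in> {0..t}"
  shows "Xminus t Z f s = f 0 * leftlim Z s - f s * Z 0 + (LBINT u:{0..s}. leftlim Z (s - u) * d 1 u)"
proof -
  note W = wderiv_props[OF f]
  note F = sob_derivs_props[OF d]
  have "(LBINT u:{0..s}. leftlim Z u * - wderiv t f (s - u)) = (LBINT u:{0..s}. (-1) * (leftlim Z u * wderiv t f (s - u)))"
    by simp
  also have "\<dots> = - (LBINT u:{0..s}. leftlim Z u * wderiv t f (s - u))"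
    by (subst set_integral_mult_right) simp
  also have "(LBINT u:{0..s}. leftlim Z u * wderiv t f (s - u)) = (LBINT u:{0..s}. leftlim Z (s - u) * wderiv t f u)"
    by (rule reflect_int)
  also have "\<dots> = (LBINT u:{0..s}. leftlim Z (s - u) * d 1 u)"
  proof (rule sint_cong_AE)
    show "smeas {0..s} (\<lambda>u. leftlim Z (s - u) * wderiv t f u)" by (rule conv_smeas[OF W(1) s])
    show "smeas {0..s} (\<lambda>u. leftlim Z (s - u) * d 1 u)" using F(2)[of 1] m_pos by (intro conv_smeas[OF _ s]) auto
    show "AE x in lborel. x \<in> {0..s} \<longrightarrow> leftlim Z (s - x) * wderiv t f x = leftlim Z (s - x) * d 1 x"
      using wderiv_ae[OF f d] by (rule eventually_mono) (use s in auto)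
  qed simp
  finally have "(LBINT u:{0..s}. leftlim Z u * - wderiv t f (s - u)) = - (LBINT u:{0..s}. leftlim Z (s - u) * d 1 u)" .
  then show ?thesis unfolding Xminus_def pw_int_def by simp
qed

end

context xsetup
begin

lemma X_lin:
  assumes f: "f \<in> S" and g: "g \<in> S" and s: "s \<in> {0..t}"
  shows "Xminus t Z (\<lambda>x. a * f x + b * g x) s = a * Xminus t Z f s + b * Xminus t Z g s"
proof -
  obtain df where df: "sob_derivs m t f df" using f by (rule sobolev_wit)
  obtain dg where dg: "sob_derivs m t g dg" using g by (rule sobolev_wit)
  have dfg: "sob_derivs m t (\<lambda>x. a * f x + b * g x) (\<lambda>k x. a * df k x + b * dg k x)"
    by (rule sob_derivs_lin[OF df dg])
  have fg: "(\<lambda>x. a * f x + b * g x) \<in> S" by (rule sobolev_lin[OF f g])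
  have m1: "1 \<le> m" using m_pos .
  have i1: "set_integrable lborel {0..s} (\<lambda>u. leftlim Z (s - u) * df 1 u)"
    by (rule conv_int[OF _ sob_d1_int[OF df] s]) (use sob_derivs_props(2)[OF df m1] in simp)
  have i2: "set_integrable lborel {0..s} (\<lambda>u. leftlim Z (s - u) * dg 1 u)"
    by (rule conv_int[OF _ sob_d1_int[OF dg] s]) (use sob_derivs_props(2)[OF dg m1] in simp)
  have "(LBINT u:{0..s}. leftlim Z (s - u) * (a * df 1 u + b * dg 1 u))
      = (LBINT u:{0..s}. a * (leftlim Z (s - u) * df 1 u) + b * (leftlim Z (s - u) * dg 1 u))"
    by (simp add: algebra_simps)
  also have "\<dots> = a * (LBINT u:{0..s}. leftlim Z (s - u) * df 1 u) + b * (LBINT u:{0..s}. leftlim Z (s - u) * dg 1 u)"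
    using i1 i2 by (subst set_integral_add(2)) auto
  finally have I: "(LBINT u:{0..s}. leftlim Z (s - u) * (a * df 1 u + b * dg 1 u))
      = a * (LBINT u:{0..s}. leftlim Z (s - u) * df 1 u) + b * (LBINT u:{0..s}. leftlim Z (s - u) * dg 1 u)" .
  show ?thesis
    unfolding X_formula[OF fg dfg s] X_formula[OF f df s] X_formula[OF g dg s] I
    by (simp add: algebra_simps)
qed

lemma X_bound: "\<exists>Kx\<ge>0. \<forall>f\<in>S. \<forall>s\<in>{0..t}. \<bar>Xminus t Z f s\<bar> \<le> Kx * sqrt (ip f f)"
proof -
  obtain K where K: "K \<ge> 0" "\<forall>y\<in>{0..t}. \<bar>Z y\<bar> \<le> K \<and> \<bar>leftlim Z y\<bar> \<le> K" using Z_bdd by blast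
  obtain Ke where Ke: "Ke \<ge> 0" "\<forall>f\<in>S. \<forall>x. \<bar>f x\<bar> \<le> Ke * sqrt (ip f f)" using embed by blast
  obtain Kw where Kw: "Kw \<ge> 0" "\<forall>f\<in>S. \<forall>d. sob_derivs m t f d \<longrightarrow> (LBINT u:{0..t}. \<bar>d 1 u\<bar>) \<le> Kw * sqrt (ip f f)"
    using L1_bound by blast
  have "\<bar>Xminus t Z f s\<bar> \<le> (K * (2 * Ke + Kw)) * sqrt (ip f f)" if f: "f \<in> S" and s: "s \<in> {0..t}" for f s
  proof -
    obtain d where d: "sob_derivs m t f d" using f by (rule sobolev_wit)
    have m1: "1 \<le> m" using m_pos .
    have sm: "smeas {0..t} (d 1)" using sob_derivs_props(2)[OF d m1] by simp
    have i1: "set_integrable lborel {0..s} (\<lambda>u. leftlim Z (s - u) * d 1 u)"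
      by (rule conv_int[OF sm sob_d1_int[OF d] s])
    have ia: "set_integrable lborel {0..s} (\<lambda>u. \<bar>d 1 u\<bar>)"
      by (intro set_integrable_abs set_integrable_subset[OF sob_d1_int[OF d]]) (use s in auto)
    have "\<bar>LBINT u:{0..s}. leftlim Z (s - u) * d 1 u\<bar> \<le> (LBINT u:{0..s}. \<bar>leftlim Z (s - u) * d 1 u\<bar>)"
      using set_integral_norm_bound[OF i1] by simp
    also have "\<dots> \<le> (LBINT u:{0..s}. K * \<bar>d 1 u\<bar>)"
    proof (rule set_integral_mono)
      show "set_integrable lborel {0..s} (\<lambda>u. \<bar>leftlim Z (s - u) * d 1 u\<bar>)" using set_integrable_abs[OF i1] .
      show "set_integrable lborel {0..s} (\<lambda>u. K * \<bar>d 1 u\<bar>)" using ia by simp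
      fix u assume u: "u \<in> {0..s}"
      then have "\<bar>leftlim Z (s - u)\<bar> \<le> K" using K s by auto
      then show "\<bar>leftlim Z (s - u) * d 1 u\<bar> \<le> K * \<bar>d 1 u\<bar>" by (simp add: abs_mult mult_right_mono)
    qed
    also have "\<dots> = K * (LBINT u:{0..s}. \<bar>d 1 u\<bar>)" by simp
    also have "\<dots> \<le> K * (LBINT u:{0..t}. \<bar>d 1 u\<bar>)"
      using K(1) s by (intro mult_left_mono sint_subset_le set_integrable_abs sob_d1_int[OF d]) auto
    also have "\<dots> \<le> K * (Kw * sqrt (ip f f))" using Kw f d K(1) by (intro mult_left_mono) auto
    finally have c: "\<bar>LBINT u:{0..s}. leftlim Z (s - u) * d 1 u\<bar> \<le> K * (Kw * sqrt (ip f f))" .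
    have a: "\<bar>f 0 * leftlim Z s\<bar> \<le> (Ke * sqrt (ip f f)) * K"
      unfolding abs_mult using Ke K s f ip_nonneg[OF f] by (intro mult_mono) auto
    have b: "\<bar>f s * Z 0\<bar> \<le> (Ke * sqrt (ip f f)) * K"
      unfolding abs_mult using Ke K s f t_pos ip_nonneg[OF f] by (intro mult_mono) auto
    have "\<bar>Xminus t Z f s\<bar> \<le> \<bar>f 0 * leftlim Z s\<bar> + \<bar>f s * Z 0\<bar> + \<bar>LBINT u:{0..s}. leftlim Z (s - u) * d 1 u\<bar>"
      unfolding X_formula[OF f d s] by linarith
    also have "\<dots> \<le> (K * (2 * Ke + Kw)) * sqrt (ip f f)"
      using a b c by (simp add: algebra_simps)
    finally show ?thesis .
  qed
  moreover have "K * (2 * Ke + Kw) \<ge> 0" using K Ke Kw by simp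
  ultimately show ?thesis by blast
qed

lemma X_smeas:
  assumes f: "f \<in> S"
  shows "smeas {0..t} (Xminus t Z f)"
proof -
  obtain d where d: "sob_derivs m t f d" using f by (rule sobolev_wit)
  note F = sob_derivs_props[OF d]
  obtain GZ where GZ[measurable]: "GZ \<in> borel_measurable borel" "\<And>x. x \<in> {0..t} \<Longrightarrow> leftlim Z x = GZ x"
    using LZ_meas unfolding smeas_def by blast
  obtain D where D[measurable]: "D \<in> borel_measurable borel" "\<And>x. x \<in> {0..t} \<Longrightarrow> d 1 x = D x"
    using F(2)[of 1] m_pos unfolding smeas_def by auto
  obtain Fm where Fm[measurable]: "Fm \<in> borel_measurable borel" "\<And>x. x \<in> {0..t} \<Longrightarrow> d 0 x = Fm x"
    using F(2)[of 0] unfolding smeas_def by auto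
  define C where "C = (\<lambda>s. \<integral>u. (if 0 \<le> u \<and> u \<le> s then 1 else 0) * (GZ (s - u) * D u) \<partial>lborel)"
  have Cm: "C \<in> borel_measurable borel"
  proof -
    have "(\<lambda>(s, u). (if 0 \<le> u \<and> u \<le> s then 1 else 0) * (GZ (s - u) * D u)) \<in> borel_measurable (lborel \<Otimes>\<^sub>M lborel)"
      by measurable
    then have "(\<lambda>s. \<integral>u. (if 0 \<le> u \<and> u \<le> s then 1 else 0) * (GZ (s - u) * D u) \<partial>lborel) \<in> borel_measurable lborel"
      by (rule lborel.borel_measurable_lebesgue_integral)
    then show ?thesis unfolding C_def by simp
  qed
  show ?thesis
  proof (rule smeasI[where G="\<lambda>s. Fm 0 * GZ s - Fm s * Z 0 + C s"])
    show "(\<lambda>s. Fm 0 * GZ s - Fm s * Z 0 + C s) \<in> borel_measurable borel" using Cm by measurable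
    fix s assume s: "s \<in> {0..t}"
    have "(LBINT u:{0..s}. leftlim Z (s - u) * d 1 u) = C s"
      unfolding C_def set_lebesgue_integral_def
    proof (intro Bochner_Integration.integral_cong refl)
      fix u
      show "indicator {0..s} u *\<^sub>R (leftlim Z (s - u) * d 1 u) = (if 0 \<le> u \<and> u \<le> s then 1 else 0) * (GZ (s - u) * D u)"
      proof (cases "u \<in> {0..s}")
        case True
        then have "u \<in> {0..t}" "s - u \<in> {0..t}" using s by auto
        then show ?thesis using True GZ(2) D(2) by simp
      next
        case False
        then have "\<not> (0 \<le> u \<and> u \<le> s)" by simp
        then show ?thesis using False by auto
      qed
    qed
    moreover have "f 0 = Fm 0" "f s = Fm s" using F(1) Fm(2) s t_pos by auto
    ultimately show "Xminus t Z f s = Fm 0 * GZ s - Fm s * Z 0 + C s"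
      unfolding X_formula[OF f d s] using GZ(2)[OF s] by simp
  qed
qed

end

context sobip
begin

lemma sum_in_S:
  fixes psi :: "nat \<Rightarrow> real \<Rightarrow> real" and n :: nat
  assumes psi: "\<forall>i<n. psi i \<in> S" and S0: "(\<lambda>x. 0) \<in> S"
  shows "(\<lambda>x. \<Sum>i<n. c i * psi i x) \<in> S"
  using psi
proof (induction n)
  case 0 then show ?case using S0 by simp
next
  case (Suc n)
  have "(\<lambda>x. 1 * (\<Sum>i<n. c i * psi i x) + c n * psi n x) \<in> S"
    using Suc by (intro sobolev_lin) auto
  then show ?case by simp
qed

lemma zero_in_S: assumes "f \<in> S" shows "(\<lambda>x. 0) \<in> S"
  using sobolev_lin[OF assms assms, of 0 0] by simp

lemma ip_sum:
  fixes psi :: "nat \<Rightarrow> real \<Rightarrow> real" and n :: nat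
  assumes psi: "\<forall>i<n. psi i \<in> S" and p: "p \<in> S"
  shows "ip p (\<lambda>x. \<Sum>i<n. c i * psi i x) = (\<Sum>i<n. c i * ip p (psi i))"
  using psi
proof (induction n)
  case 0
  have "ip p (\<lambda>x. 0 * p x + 0 * p x) = 0 * ip p p + 0 * ip p p" by (rule ip_lin2[OF p p p])
  then show ?case by simp
next
  case (Suc n)
  have s: "(\<lambda>x. \<Sum>i<n. c i * psi i x) \<in> S" using Suc.prems zero_in_S[OF p] by (intro sum_in_S) auto
  have "ip p (\<lambda>x. 1 * (\<Sum>i<n. c i * psi i x) + c n * psi n x) = 1 * ip p (\<lambda>x. \<Sum>i<n. c i * psi i x) + c n * ip p (psi n)"
    using Suc.prems by (intro ip_lin2[OF s _ p]) auto
  then show ?case using Suc by simp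
qed

lemma proj_exists:
  fixes psi :: "nat \<Rightarrow> real \<Rightarrow> real" and n :: nat
  assumes psi: "\<forall>i<l. psi i \<in> S"
  shows "n \<le> l \<Longrightarrow> \<forall>g\<in>S. \<exists>p\<in>S. (\<forall>i<n. ip p (psi i) = 0) \<and> (\<exists>c. \<forall>x. g x - p x = (\<Sum>i<n. c i * psi i x))"
proof (induction n)
  case 0
  show ?case by (intro ballI bexI[of _ g for g]) auto
next
  case (Suc n)
  have psin: "\<forall>i<n. psi i \<in> S" "psi n \<in> S" using psi Suc.prems by auto
  show ?case
  proof
    fix g assume g: "g \<in> S"
    have IH: "\<forall>g\<in>S. \<exists>p\<in>S. (\<forall>i<n. ip p (psi i) = 0) \<and> (\<exists>c. \<forall>x. g x - p x = (\<Sum>i<n. c i * psi i x))"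
      using Suc by simp
    obtain p0 where p0': "p0 \<in> S" "\<forall>i<n. ip p0 (psi i) = 0" "\<exists>c. \<forall>x. g x - p0 x = (\<Sum>i<n. c i * psi i x)"
      using IH g by blast
    obtain c0 where c0: "\<forall>x. g x - p0 x = (\<Sum>i<n. c0 i * psi i x)" using p0'(3) by blast
    note p0 = p0'(1,2) c0
    obtain q where q': "q \<in> S" "\<forall>i<n. ip q (psi i) = 0" "\<exists>c. \<forall>x. psi n x - q x = (\<Sum>i<n. c i * psi i x)"
      using IH psin(2) by blast
    obtain cq where cq: "\<forall>x. psi n x - q x = (\<Sum>i<n. cq i * psi i x)" using q'(3) by blast
    note q = q'(1,2) cq
    have sS: "(\<lambda>x. \<Sum>i<n. cq i * psi i x) \<in> S" using psin(1) zero_in_S[OF g] by (intro sum_in_S) auto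
    have psiq: "psi n = (\<lambda>x. 1 * q x + 1 * (\<Sum>i<n. cq i * psi i x))"
      using q(3) by (auto simp: algebra_simps)
    have orth_sum: "ip p (\<lambda>x. \<Sum>i<n. cq i * psi i x) = 0" if "p \<in> S" "\<forall>i<n. ip p (psi i) = 0" for p
      using ip_sum[OF psin(1) that(1)] that(2) by simp
    show "\<exists>p\<in>S. (\<forall>i<Suc n. ip p (psi i) = 0) \<and> (\<exists>c. \<forall>x. g x - p x = (\<Sum>i<Suc n. c i * psi i x))"
    proof (cases "ip q q = 0")
      case True
      then have q0: "q = (\<lambda>x. 0)" using ip_zero_imp[OF q(1)] by simp
      have "ip p0 (psi n) = 0"
      proof -
        have "ip p0 (psi n) = 1 * ip p0 q + 1 * ip p0 (\<lambda>x. \<Sum>i<n. cq i * psi i x)"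
          by (subst psiq) (rule ip_lin2[OF q(1) sS p0(1)])
        also have "ip p0 q = 0"
        proof -
          have "ip p0 (\<lambda>x. 0 * p0 x + 0 * p0 x) = 0 * ip p0 p0 + 0 * ip p0 p0" by (rule ip_lin2[OF p0(1) p0(1) p0(1)])
          then show ?thesis using q0 by simp
        qed
        finally show ?thesis using orth_sum[OF p0(1,2)] by simp
      qed
      then have "\<forall>i<Suc n. ip p0 (psi i) = 0" using p0(2) less_Suc_eq by auto
      moreover have "\<forall>x. g x - p0 x = (\<Sum>i<Suc n. (c0(n := 0)) i * psi i x)"
        using p0(3) by simp
      ultimately show ?thesis using p0(1) by blast
    next
      case False
      define \<alpha> where "\<alpha> = ip p0 q / ip q q"
      define p where "p = (\<lambda>x. 1 * p0 x + (- \<alpha>) * q x)"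
      have pS: "p \<in> S" unfolding p_def by (rule sobolev_lin[OF p0(1) q(1)])
      have oi: "\<forall>i<n. ip p (psi i) = 0"
      proof (intro allI impI)
        fix i assume i: "i < n"
        have "ip p (psi i) = 1 * ip p0 (psi i) + (- \<alpha>) * ip q (psi i)"
          unfolding p_def using psin i by (intro ip_lin[OF p0(1) q(1)]) auto
        then show "ip p (psi i) = 0" using p0(2) q(2) i by simp
      qed
      have "ip p q = 1 * ip p0 q + (- \<alpha>) * ip q q"
        unfolding p_def by (rule ip_lin[OF p0(1) q(1) q(1)])
      then have "ip p q = 0" using False by (simp add: \<alpha>_def)
      then have "ip p (psi n) = 0"
        using orth_sum[OF pS oi] ip_lin2[OF q(1) sS pS, of 1 1] psiq by simp
      then have o: "\<forall>i<Suc n. ip p (psi i) = 0" using oi less_Suc_eq by auto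
      define cc where "cc = (\<lambda>i. if i < n then c0 i - \<alpha> * cq i else \<alpha>)"
      have e: "\<forall>x. g x - p x = (\<Sum>i<Suc n. cc i * psi i x)"
      proof
        fix x
        have "g x - p x = (\<Sum>i<n. c0 i * psi i x) + \<alpha> * (psi n x - (\<Sum>i<n. cq i * psi i x))"
          using p0(3) q(3) unfolding p_def by (simp add: algebra_simps)
        also have "\<dots> = (\<Sum>i<n. (c0 i - \<alpha> * cq i) * psi i x) + \<alpha> * psi n x"
          by (simp add: algebra_simps sum_subtractf sum_distrib_left)
        also have "(\<Sum>i<n. (c0 i - \<alpha> * cq i) * psi i x) = (\<Sum>i<n. cc i * psi i x)"
          by (intro sum.cong) (auto simp: cc_def)
        finally show "g x - p x = (\<Sum>i<Suc n. cc i * psi i x)"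
          by (simp add: cc_def)
      qed
      show ?thesis
        using o e pS by blast
    qed
  qed
qed

lemma proj_unique:
  fixes psi :: "nat \<Rightarrow> real \<Rightarrow> real"
  assumes psi: "\<forall>i<l. psi i \<in> S"
    and p1: "p1 \<in> S" "\<forall>i<l. ip p1 (psi i) = 0" "\<forall>x. g x - p1 x = (\<Sum>i<l. c1 i * psi i x)"
    and p2: "p2 \<in> S" "\<forall>i<l. ip p2 (psi i) = 0" "\<forall>x. g x - p2 x = (\<Sum>i<l. c2 i * psi i x)"
  shows "p1 = p2"
proof -
  define D where "D = (\<lambda>x. 1 * p1 x + (-1) * p2 x)"
  have DS: "D \<in> S" unfolding D_def by (rule sobolev_lin[OF p1(1) p2(1)])
  have Do: "\<forall>i<l. ip D (psi i) = 0"
  proof (intro allI impI)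
    fix i assume i: "i < l"
    have "ip D (psi i) = 1 * ip p1 (psi i) + (-1) * ip p2 (psi i)"
      unfolding D_def using psi i by (intro ip_lin[OF p1(1) p2(1)]) auto
    then show "ip D (psi i) = 0" using p1(2) p2(2) i by simp
  qed
  have De: "D = (\<lambda>x. \<Sum>i<l. (c2 i - c1 i) * psi i x)"
  proof
    fix x
    have "D x = (g x - p2 x) - (g x - p1 x)" by (simp add: D_def)
    also have "\<dots> = (\<Sum>i<l. (c2 i - c1 i) * psi i x)" using p1(3) p2(3) by (simp add: algebra_simps sum_subtractf)
    finally show "D x = (\<Sum>i<l. (c2 i - c1 i) * psi i x)" .
  qed
  have "ip D D = 0"
    using ip_sum[OF psi DS, of "\<lambda>i. c2 i - c1 i"] Do De by simp
  then have "D = (\<lambda>x. 0)" using ip_zero_imp[OF DS] by simp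
  then show ?thesis unfolding D_def fun_eq_iff by simp
qed

lemma proj_props:
  fixes psi :: "nat \<Rightarrow> real \<Rightarrow> real"
  assumes psi: "\<forall>i<l. psi i \<in> S" and g: "g \<in> S"
  shows "orth_proj m t ip psi l g \<in> S" "\<forall>i<l. ip (orth_proj m t ip psi l g) (psi i) = 0"
    "\<exists>c. \<forall>x. g x - orth_proj m t ip psi l g x = (\<Sum>i<l. c i * psi i x)"
proof -
  have ex: "\<exists>p. p \<in> S \<and> (\<forall>i<l. ip p (psi i) = 0) \<and> (\<exists>c. \<forall>x. g x - p x = (\<Sum>i<l. c i * psi i x))"
    using proj_exists[OF psi order_refl] g by blast
  have "\<exists>!p. p \<in> S \<and> (\<forall>i<l. ip p (psi i) = 0) \<and> (\<exists>c. \<forall>x. g x - p x = (\<Sum>i<l. c i * psi i x))"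
    using ex proj_unique[OF psi] by blast
  then have "orth_proj m t ip psi l g \<in> S \<and> (\<forall>i<l. ip (orth_proj m t ip psi l g) (psi i) = 0) \<and>
      (\<exists>c. \<forall>x. g x - orth_proj m t ip psi l g x = (\<Sum>i<l. c i * psi i x))"
    unfolding orth_proj_def by (rule theI')
  then show "orth_proj m t ip psi l g \<in> S" "\<forall>i<l. ip (orth_proj m t ip psi l g) (psi i) = 0"
    "\<exists>c. \<forall>x. g x - orth_proj m t ip psi l g x = (\<Sum>i<l. c i * psi i x)" by blast+
qed

lemma proj_lip:
  fixes psi :: "nat \<Rightarrow> real \<Rightarrow> real"
  assumes psi: "\<forall>i<l. psi i \<in> S" and g: "g \<in> S" and h: "h \<in> S"
  defines "D \<equiv> (\<lambda>x. orth_proj m t ip psi l g x - orth_proj m t ip psi l h x)"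
  shows "D \<in> S" "sqrt (ip D D) \<le> sqrt (ip (\<lambda>x. g x - h x) (\<lambda>x. g x - h x))"
proof -
  note G = proj_props[OF psi g] and H = proj_props[OF psi h]
  obtain cg where cg: "\<forall>x. g x - orth_proj m t ip psi l g x = (\<Sum>i<l. cg i * psi i x)" using G(3) by blast
  obtain ch where ch: "\<forall>x. h x - orth_proj m t ip psi l h x = (\<Sum>i<l. ch i * psi i x)" using H(3) by blast
  have De: "D = (\<lambda>x. 1 * orth_proj m t ip psi l g x + (-1) * orth_proj m t ip psi l h x)"
    unfolding D_def by simp
  show DS: "D \<in> S" unfolding De by (rule sobolev_lin[OF G(1) H(1)])
  have Do: "\<forall>i<l. ip D (psi i) = 0"
  proof (intro allI impI)
    fix i assume i: "i < l"
    have "ip D (psi i) = 1 * ip (orth_proj m t ip psi l g) (psi i) + (-1) * ip (orth_proj m t ip psi l h) (psi i)"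
      unfolding De using psi i by (intro ip_lin[OF G(1) H(1)]) auto
    then show "ip D (psi i) = 0" using G(2) H(2) i by simp
  qed
  have sS: "(\<lambda>x. \<Sum>i<l. (cg i - ch i) * psi i x) \<in> S" using psi zero_in_S[OF g] by (intro sum_in_S) auto
  have gh: "(\<lambda>x. g x - h x) = (\<lambda>x. 1 * D x + 1 * (\<Sum>i<l. (cg i - ch i) * psi i x))"
  proof
    fix x
    show "g x - h x = 1 * D x + 1 * (\<Sum>i<l. (cg i - ch i) * psi i x)"
      using cg ch unfolding D_def by (simp add: algebra_simps sum_subtractf)
  qed
  have ghS: "(\<lambda>x. g x - h x) \<in> S" using sobolev_lin[OF g h, of 1 "-1"] by simp
  have "ip D (\<lambda>x. g x - h x) = 1 * ip D D + 1 * ip D (\<lambda>x. \<Sum>i<l. (cg i - ch i) * psi i x)"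
    unfolding gh by (rule ip_lin2[OF DS sS DS])
  also have "ip D (\<lambda>x. \<Sum>i<l. (cg i - ch i) * psi i x) = 0"
    using ip_sum[OF psi DS] Do by simp
  finally have "ip D D = ip D (\<lambda>x. g x - h x)" by simp
  also have "\<dots> \<le> sqrt (ip D D) * sqrt (ip (\<lambda>x. g x - h x) (\<lambda>x. g x - h x))"
    using ip_cs[OF DS ghS] by simp
  finally have *: "ip D D \<le> sqrt (ip D D) * sqrt (ip (\<lambda>x. g x - h x) (\<lambda>x. g x - h x))" .
  show "sqrt (ip D D) \<le> sqrt (ip (\<lambda>x. g x - h x) (\<lambda>x. g x - h x))"
  proof (cases "ip D D = 0")
    case True then show ?thesis using ip_nonneg[OF ghS] by simp
  next
    case False
    then have p: "0 < sqrt (ip D D)" using ip_nonneg[OF DS] by simp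
    have "sqrt (ip D D) * sqrt (ip D D) \<le> sqrt (ip D D) * sqrt (ip (\<lambda>x. g x - h x) (\<lambda>x. g x - h x))"
      using * ip_nonneg[OF DS] by simp
    then show ?thesis using p by (rule mult_left_le_imp_le)
  qed
qed

end

lemma mvt_bound:
  fixes f f' :: "real \<Rightarrow> real"
  assumes der: "\<And>z. (f has_real_derivative f' z) (at z)"
    and bnd: "\<And>z. min a b \<le> z \<Longrightarrow> z \<le> max a b \<Longrightarrow> \<bar>f' z\<bar> \<le> B"
  shows "\<bar>f b - f a\<bar> \<le> B * \<bar>b - a\<bar>"
proof -
  have main: "\<bar>f y - f x\<bar> \<le> B * \<bar>y - x\<bar>" if xy: "x < y" "\<And>z. x \<le> z \<Longrightarrow> z \<le> y \<Longrightarrow> \<bar>f' z\<bar> \<le> B" for x y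
  proof -
    obtain z where z: "x < z" "z < y" "f y - f x = (y - x) * f' z"
      using MVT2[OF xy(1), of f f'] der by blast
    have "\<bar>f y - f x\<bar> = \<bar>y - x\<bar> * \<bar>f' z\<bar>" using z(3) by (simp add: abs_mult)
    also have "\<dots> \<le> \<bar>y - x\<bar> * B" using xy(2)[of z] z by (intro mult_left_mono) auto
    finally show ?thesis by (simp add: mult.commute)
  qed
  consider "a < b" | "a = b" | "b < a" by linarith
  then show ?thesis
  proof cases
    case 1 then show ?thesis using main[of a b] bnd by auto
  next
    case 2 then show ?thesis by simp
  next
    case 3 then show ?thesis using main[of b a] bnd by (auto simp: abs_minus_commute)
  qed
qed

lemma sec_diff:
  fixes q q' q'' :: "real \<Rightarrow> real"
  assumes d1: "\<And>x. (q has_real_derivative q' x) (at x)"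
    and d2: "\<And>x. (q' has_real_derivative q'' x) (at x)"
    and K: "\<And>z. z \<in> {-R..R} \<Longrightarrow> \<bar>q'' z\<bar> \<le> K"
    and x: "\<bar>x\<bar> \<le> R0" and y: "\<bar>y\<bar> \<le> R0" and e: "\<bar>e\<bar> \<le> 1" and R: "R0 + 1 \<le> R"
  shows "\<bar>q (x + e) - q x - q (y + e) + q y\<bar> \<le> K * \<bar>e\<bar> * \<bar>x - y\<bar>"
proof -
  define u where "u = (\<lambda>z. q (z + e) - q z)"
  define u' where "u' = (\<lambda>z. q' (z + e) - q' z)"
  have du: "(u has_real_derivative u' z) (at z)" for z
    unfolding u_def u'_def
    by (rule derivative_eq_intros DERIV_chain2[OF d1] d1 | simp)+
  have bu: "\<bar>u' z\<bar> \<le> K * \<bar>e\<bar>" if z: "min x y \<le> z" "z \<le> max x y" for z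
  proof -
    have zb: "\<bar>z\<bar> \<le> R0" using z x y by auto
    have "\<bar>q' (z + e) - q' z\<bar> \<le> K * \<bar>(z + e) - z\<bar>"
    proof (rule mvt_bound[OF d2])
      fix w assume "min z (z + e) \<le> w" "w \<le> max z (z + e)"
      then have "w \<in> {-R..R}" using zb e R by auto
      then show "\<bar>q'' w\<bar> \<le> K" by (rule K)
    qed
    then show ?thesis by (simp add: u'_def)
  qed
  have "\<bar>u x - u y\<bar> \<le> (K * \<bar>e\<bar>) * \<bar>x - y\<bar>"
    using mvt_bound[OF du, of y x "K * \<bar>e\<bar>"] bu by (simp add: min.commute max.commute)
  then show ?thesis by (simp add: u_def algebra_simps)
qed

lemma cont_bound:
  fixes g :: "real \<Rightarrow> real"
  assumes "continuous_on {a..b} g"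
  shows "\<exists>K. \<forall>x\<in>{a..b}. \<bar>g x\<bar> \<le> K"
proof -
  have "compact (g ` {a..b})" by (rule compact_continuous_image[OF assms]) simp
  then have "bounded (g ` {a..b})" by (rule compact_imp_bounded)
  then show ?thesis unfolding bounded_iff by auto
qed

locale full = xsetup +
  fixes phi Y :: "real \<Rightarrow> real" and J :: "real set" and phi' phi'' :: "real \<Rightarrow> real"
  assumes phi_pos: "\<forall>x. 0 < phi x"
    and pd1: "\<forall>x. (phi has_real_derivative phi' x) (at x)"
    and pd2: "\<forall>x. (phi' has_real_derivative phi'' x) (at x)"
    and pc: "continuous_on UNIV phi''"
    and Yc: "cadlag_on t Y" and Yn: "\<forall>s\<in>{0..t}. 0 \<le> Y s"
    and Jf: "finite J" and Js: "J \<subseteq> {0<..t}" and Yj: "\<forall>\<tau>\<in>J. 0 < Y \<tau>"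
begin

lemma phi_ne: "phi x \<noteq> 0"
  using phi_pos by (metis less_irrefl)

lemma phi_cont: "continuous_on UNIV phi"
  using pd1 by (intro continuous_at_imp_continuous_on) (auto intro: DERIV_isCont)

lemma phi'_cont: "continuous_on UNIV phi'"
  using pd2 by (intro continuous_at_imp_continuous_on) (auto intro: DERIV_isCont)

lemma phi_meas[measurable]: "phi \<in> borel_measurable borel"
  by (rule borel_measurable_continuous_onI[OF phi_cont])

lemma Y_smeas: "smeas {0..t} Y"
proof -
  have "\<forall>x\<in>{0..<t}. (Y \<longlongrightarrow> Y x) (at_right x)" using Yc by (simp add: cadlag_on_def)
  then have m: "(\<lambda>x. Y (max 0 (min t x))) \<in> borel_measurable borel" by (rule rc_clamp_meas[OF t_pos])
  show ?thesis by (rule smeasI[OF m]) auto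
qed

lemma Y_bdd: "\<exists>KY\<ge>0. \<forall>s\<in>{0..t}. \<bar>Y s\<bar> \<le> KY"
proof -
  obtain K where "\<forall>y\<in>{0..t}. \<bar>Y y\<bar> \<le> K \<and> \<bar>leftlim Y y\<bar> \<le> K" using cadlag_bdd[OF t_pos Yc] by blast
  moreover have "K \<ge> 0" using calculation t_pos by (meson abs_ge_zero atLeastAtMost_iff order_trans less_imp_le order_refl)
  ultimately show ?thesis by blast
qed

lemma I_int:
  assumes f: "f \<in> S"
  shows "set_integrable lborel {0..t} (\<lambda>s. Y s * phi (Xminus t Z f s))"
proof -
  obtain YY where YY[measurable]: "YY \<in> borel_measurable borel" "\<And>x. x \<in> {0..t} \<Longrightarrow> Y x = YY x"
    using Y_smeas unfolding smeas_def by blast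
  obtain XX where XX[measurable]: "XX \<in> borel_measurable borel" "\<And>x. x \<in> {0..t} \<Longrightarrow> Xminus t Z f x = XX x"
    using X_smeas[OF f] unfolding smeas_def by blast
  obtain Kx where Kx: "Kx \<ge> 0" "\<forall>f\<in>S. \<forall>s\<in>{0..t}. \<bar>Xminus t Z f s\<bar> \<le> Kx * sqrt (ip f f)"
    using X_bound by blast
  define r where "r = Kx * sqrt (ip f f)"
  obtain KP where KP: "\<forall>x\<in>{-r..r}. \<bar>phi x\<bar> \<le> KP"
    using cont_bound[OF continuous_on_subset[OF phi_cont]] by blast
  obtain KY where KY: "KY \<ge> 0" "\<forall>s\<in>{0..t}. \<bar>Y s\<bar> \<le> KY" using Y_bdd by blast
  show ?thesis
  proof (rule sint_bdd[where K="KY * KP"])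
    have "smeas {0..t} (\<lambda>s. Y s * phi (Xminus t Z f s))"
      by (rule smeasI[where G="\<lambda>s. YY s * phi (XX s)"]) (auto simp: YY XX)
    then show "set_borel_measurable lborel {0..t} (\<lambda>s. Y s * phi (Xminus t Z f s))"
      by (simp add: smeas_sint_iff)
    show "\<forall>s\<in>{0..t}. \<bar>Y s * phi (Xminus t Z f s)\<bar> \<le> KY * KP"
    proof
      fix s assume s: "s \<in> {0..t}"
      have "\<bar>Xminus t Z f s\<bar> \<le> r" using Kx f s by (simp add: r_def)
      then have "Xminus t Z f s \<in> {-r..r}" by (simp add: abs_le_iff)
      then have "\<bar>phi (Xminus t Z f s)\<bar> \<le> KP" using KP by blast
      then show "\<bar>Y s * phi (Xminus t Z f s)\<bar> \<le> KY * KP"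
        unfolding abs_mult using KY s by (intro mult_mono) auto
    qed
  qed
qed

definition "rho' x = phi' x / phi x"
definition "rho'' x = (phi'' x * phi x - phi' x * phi' x) / (phi x)^2"

lemma rho_d1: "((\<lambda>x. ln (phi x)) has_real_derivative rho' x) (at x)"
proof -
  have "((\<lambda>x. ln (phi x)) has_real_derivative (1 / phi x) * phi' x) (at x)"
    by (rule DERIV_chain2[OF DERIV_ln_divide]) (use phi_pos pd1 in auto)
  then show ?thesis by (simp add: rho'_def)
qed

lemma rho_d2: "(rho' has_real_derivative rho'' x) (at x)"
proof -
  have "((\<lambda>x. phi' x / phi x) has_real_derivative (phi'' x * phi x - phi' x * phi' x) / (phi x * phi x)) (at x)"
    using pd1 pd2 phi_ne by (intro DERIV_divide) auto
  moreover have "rho' = (\<lambda>x. phi' x / phi x)" by (simp add: rho'_def[abs_def])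
  ultimately show ?thesis by (simp add: rho''_def power2_eq_square)
qed

lemma rho''_cont: "continuous_on UNIV rho''"
proof -
  have "continuous_on UNIV (\<lambda>x. (phi'' x * phi x - phi' x * phi' x) / (phi x)^2)"
    using pc phi_cont phi'_cont phi_ne by (intro continuous_intros) auto
  then show ?thesis by (simp add: rho''_def[abs_def])
qed

end

context full
begin

lemma shift_S: "f \<in> S \<Longrightarrow> k \<in> S \<Longrightarrow> (\<lambda>x. f x + e * k x) \<in> S"
  using sobolev_lin[of f m t k 1 e] by simp

lemma diff_S: "f \<in> S \<Longrightarrow> k \<in> S \<Longrightarrow> (\<lambda>x. f x - k x) \<in> S"
  using sobolev_lin[of f m t k 1 "-1"] by simp

lemma X_shift: "f \<in> S \<Longrightarrow> k \<in> S \<Longrightarrow> s \<in> {0..t} \<Longrightarrow>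
    Xminus t Z (\<lambda>x. f x + e * k x) s = Xminus t Z f s + e * Xminus t Z k s"
  using X_lin[of f k s 1 e] by simp

lemma X_diff: "f \<in> S \<Longrightarrow> k \<in> S \<Longrightarrow> s \<in> {0..t} \<Longrightarrow>
    Xminus t Z (\<lambda>x. f x - k x) s = Xminus t Z f s - Xminus t Z k s"
  using X_lin[of f k s 1 "-1"] by simp

lemma loglik_split:
  "loglik phi Y Z J t f = (LBINT s:{0..t}. Y s * phi (Xminus t Z f s)) - (\<Sum>\<tau>\<in>J. ln (Y \<tau>)) - (\<Sum>\<tau>\<in>J. ln (phi (Xminus t Z f \<tau>)))"
proof -
  have "(\<Sum>\<tau>\<in>J. ln (Y \<tau> * phi (Xminus t Z f \<tau>))) = (\<Sum>\<tau>\<in>J. ln (Y \<tau>) + ln (phi (Xminus t Z f \<tau>)))"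
    using Yj phi_pos by (intro sum.cong refl ln_mult_pos) auto
  then show ?thesis unfolding loglik_def by (simp add: sum.distrib)
qed

lemma second_diff_bound:
  fixes g h k :: "real \<Rightarrow> real" and M Kx R K2 Kr KY e :: real
  assumes g: "g \<in> S" and h: "h \<in> S" and k: "k \<in> S"
    and gM: "ip g g \<le> M" and hM: "ip h h \<le> M"
    and Kx: "Kx \<ge> 0" "\<forall>f\<in>S. \<forall>s\<in>{0..t}. \<bar>Xminus t Z f s\<bar> \<le> Kx * sqrt (ip f f)"
    and R: "R = Kx * sqrt M + 1"
    and K2: "\<forall>z\<in>{-R..R}. \<bar>phi'' z\<bar> \<le> K2" and Kr: "\<forall>z\<in>{-R..R}. \<bar>rho'' z\<bar> \<le> Kr"
    and KY: "KY \<ge> 0" "\<forall>s\<in>{0..t}. \<bar>Y s\<bar> \<le> KY"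
    and e: "\<bar>e\<bar> * (Kx * sqrt (ip k k)) \<le> 1"
  shows "\<bar>(loglik phi Y Z J t (\<lambda>x. g x + e * k x) - loglik phi Y Z J t g)
          - (loglik phi Y Z J t (\<lambda>x. h x + e * k x) - loglik phi Y Z J t h)\<bar>
         \<le> (KY * K2 * t + real (card J) * Kr) * ((\<bar>e\<bar> * (Kx * sqrt (ip k k))) * (Kx * sqrt (ip (\<lambda>x. g x - h x) (\<lambda>x. g x - h x))))"
proof -
  define E where "E = \<bar>e\<bar> * (Kx * sqrt (ip k k))"
  define D where "D = Kx * sqrt (ip (\<lambda>x. g x - h x) (\<lambda>x. g x - h x))"
  define r0 where "r0 = Kx * sqrt M"
  have ge: "(\<lambda>x. g x + e * k x) \<in> S" and he: "(\<lambda>x. h x + e * k x) \<in> S" and gh: "(\<lambda>x. g x - h x) \<in> S"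
    using shift_S[OF g k] shift_S[OF h k] diff_S[OF g h] by auto
  have M0: "0 \<le> M" using gM ip_nonneg[OF g] by linarith
  have "0 \<le> Kx * sqrt M" using Kx M0 by simp
  then have R0: "0 < R" using R by simp
  have K2n: "0 \<le> K2" using K2 R0 by force
  have Krn: "0 \<le> Kr" using Kr R0 by force
  have E0: "0 \<le> E" using Kx ip_nonneg[OF k] by (simp add: E_def)
  have D0: "0 \<le> D" using Kx ip_nonneg[OF gh] by (simp add: D_def)
  have pt: "\<bar>q (Xminus t Z g s + e * Xminus t Z k s) - q (Xminus t Z g s)
             - q (Xminus t Z h s + e * Xminus t Z k s) + q (Xminus t Z h s)\<bar> \<le> Kq * E * D"
    if s: "s \<in> {0..t}" and d1: "\<And>x. (q has_real_derivative q' x) (at x)"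
      and d2: "\<And>x. (q' has_real_derivative q'' x) (at x)"
      and Kq: "\<forall>z\<in>{-R..R}. \<bar>q'' z\<bar> \<le> Kq" and Kqn: "0 \<le> Kq" for s q q' q'' Kq
  proof -
    have a: "\<bar>Xminus t Z g s\<bar> \<le> r0"
    proof -
      have "\<bar>Xminus t Z g s\<bar> \<le> Kx * sqrt (ip g g)" using Kx g s by blast
      also have "\<dots> \<le> Kx * sqrt M" using gM Kx by (intro mult_left_mono) auto
      finally show ?thesis by (simp add: r0_def)
    qed
    have a': "\<bar>Xminus t Z h s\<bar> \<le> r0"
    proof -
      have "\<bar>Xminus t Z h s\<bar> \<le> Kx * sqrt (ip h h)" using Kx h s by blast
      also have "\<dots> \<le> Kx * sqrt M" using hM Kx by (intro mult_left_mono) auto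
      finally show ?thesis by (simp add: r0_def)
    qed
    have b: "\<bar>e * Xminus t Z k s\<bar> \<le> E"
    proof -
      have "\<bar>Xminus t Z k s\<bar> \<le> Kx * sqrt (ip k k)" using Kx k s by blast
      then have "\<bar>e\<bar> * \<bar>Xminus t Z k s\<bar> \<le> \<bar>e\<bar> * (Kx * sqrt (ip k k))" by (intro mult_left_mono) auto
      then show ?thesis by (simp add: E_def abs_mult)
    qed
    have dd: "\<bar>Xminus t Z g s - Xminus t Z h s\<bar> \<le> D"
    proof -
      have "\<bar>Xminus t Z (\<lambda>x. g x - h x) s\<bar> \<le> Kx * sqrt (ip (\<lambda>x. g x - h x) (\<lambda>x. g x - h x))"
        using Kx(2) gh s by blast
      then show ?thesis using X_diff[OF g h s] by (simp add: D_def)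
    qed
    have "\<bar>q (Xminus t Z g s + e * Xminus t Z k s) - q (Xminus t Z g s)
             - q (Xminus t Z h s + e * Xminus t Z k s) + q (Xminus t Z h s)\<bar>
          \<le> Kq * \<bar>e * Xminus t Z k s\<bar> * \<bar>Xminus t Z g s - Xminus t Z h s\<bar>"
      by (rule sec_diff[OF d1 d2 _ a a']) (use Kq b e R in \<open>auto simp: E_def r0_def\<close>)
    also have "\<dots> \<le> Kq * E * D"
      using b dd Kqn E0 by (intro mult_mono) auto
    finally show ?thesis .
  qed
  define P where "P = (\<lambda>f s. Y s * phi (Xminus t Z f s))"
  have Pi: "set_integrable lborel {0..t} (P f)" if "f \<in> S" for f
    unfolding P_def using I_int[OF that] .
  have int4: "set_integrable lborel {0..t} (\<lambda>s. P (\<lambda>x. g x + e * k x) s - P g s - P (\<lambda>x. h x + e * k x) s + P h s)"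
    using Pi[OF ge] Pi[OF g] Pi[OF he] Pi[OF h] by (intro set_integral_add(1) set_integral_diff(1))
  have Ieq: "(LBINT s:{0..t}. P (\<lambda>x. g x + e * k x) s) - (LBINT s:{0..t}. P g s)
      - (LBINT s:{0..t}. P (\<lambda>x. h x + e * k x) s) + (LBINT s:{0..t}. P h s)
      = (LBINT s:{0..t}. P (\<lambda>x. g x + e * k x) s - P g s - P (\<lambda>x. h x + e * k x) s + P h s)"
    using Pi[OF ge] Pi[OF g] Pi[OF he] Pi[OF h]
    by (simp add: set_integral_add set_integral_diff)
  have Ib: "\<bar>LBINT s:{0..t}. P (\<lambda>x. g x + e * k x) s - P g s - P (\<lambda>x. h x + e * k x) s + P h s\<bar>
            \<le> (KY * (K2 * E * D)) * (t - 0)"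
  proof (rule sint_abs_bound[OF int4])
    show "0 \<le> t" using t_pos by simp
    show "\<forall>s\<in>{0..t}. \<bar>P (\<lambda>x. g x + e * k x) s - P g s - P (\<lambda>x. h x + e * k x) s + P h s\<bar> \<le> KY * (K2 * E * D)"
    proof
      fix s assume s: "s \<in> {0..t}"
      have eq: "P (\<lambda>x. g x + e * k x) s - P g s - P (\<lambda>x. h x + e * k x) s + P h s
          = Y s * (phi (Xminus t Z g s + e * Xminus t Z k s) - phi (Xminus t Z g s)
             - phi (Xminus t Z h s + e * Xminus t Z k s) + phi (Xminus t Z h s))"
        unfolding P_def X_shift[OF g k s] X_shift[OF h k s] by (simp add: algebra_simps)
      have "\<bar>Y s * (phi (Xminus t Z g s + e * Xminus t Z k s) - phi (Xminus t Z g s)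
             - phi (Xminus t Z h s + e * Xminus t Z k s) + phi (Xminus t Z h s))\<bar> \<le> KY * (K2 * E * D)"
        unfolding abs_mult using KY s pt[OF s _ _ K2 K2n] pd1 pd2 by (intro mult_mono) auto
      then show "\<bar>P (\<lambda>x. g x + e * k x) s - P g s - P (\<lambda>x. h x + e * k x) s + P h s\<bar> \<le> KY * (K2 * E * D)"
        unfolding eq .
    qed
  qed
  define Q where "Q = (\<lambda>f \<tau>. ln (phi (Xminus t Z f \<tau>)))"
  have Sb: "\<bar>(\<Sum>\<tau>\<in>J. Q (\<lambda>x. g x + e * k x) \<tau>) - (\<Sum>\<tau>\<in>J. Q g \<tau>) - (\<Sum>\<tau>\<in>J. Q (\<lambda>x. h x + e * k x) \<tau>) + (\<Sum>\<tau>\<in>J. Q h \<tau>)\<bar>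
           \<le> real (card J) * (Kr * E * D)"
  proof -
    have eq: "(\<Sum>\<tau>\<in>J. Q (\<lambda>x. g x + e * k x) \<tau>) - (\<Sum>\<tau>\<in>J. Q g \<tau>) - (\<Sum>\<tau>\<in>J. Q (\<lambda>x. h x + e * k x) \<tau>) + (\<Sum>\<tau>\<in>J. Q h \<tau>)
        = (\<Sum>\<tau>\<in>J. Q (\<lambda>x. g x + e * k x) \<tau> - Q g \<tau> - Q (\<lambda>x. h x + e * k x) \<tau> + Q h \<tau>)"
      by (simp add: sum.distrib sum_subtractf)
    have "\<bar>(\<Sum>\<tau>\<in>J. Q (\<lambda>x. g x + e * k x) \<tau> - Q g \<tau> - Q (\<lambda>x. h x + e * k x) \<tau> + Q h \<tau>)\<bar> \<le> (\<Sum>\<tau>\<in>J. \<bar>Q (\<lambda>x. g x + e * k x) \<tau> - Q g \<tau> - Q (\<lambda>x. h x + e * k x) \<tau> + Q h \<tau>\<bar>)"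
      by (rule sum_abs)
    also have "\<dots> \<le> (\<Sum>\<tau>\<in>J. Kr * E * D)"
    proof (rule sum_mono)
      fix \<tau> assume "\<tau> \<in> J"
      then have s: "\<tau> \<in> {0..t}" using Js by auto
      have eq: "Q (\<lambda>x. g x + e * k x) \<tau> - Q g \<tau> - Q (\<lambda>x. h x + e * k x) \<tau> + Q h \<tau>
          = ln (phi (Xminus t Z g \<tau> + e * Xminus t Z k \<tau>)) - ln (phi (Xminus t Z g \<tau>))
             - ln (phi (Xminus t Z h \<tau> + e * Xminus t Z k \<tau>)) + ln (phi (Xminus t Z h \<tau>))"
        unfolding Q_def X_shift[OF g k s] X_shift[OF h k s] by simp
      show "\<bar>Q (\<lambda>x. g x + e * k x) \<tau> - Q g \<tau> - Q (\<lambda>x. h x + e * k x) \<tau> + Q h \<tau>\<bar> \<le> Kr * E * D"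
        unfolding eq by (rule pt[OF s rho_d1 rho_d2 Kr Krn])
    qed
    also have "\<dots> = real (card J) * (Kr * E * D)" by simp
    finally show ?thesis unfolding eq .
  qed
  have split: "loglik phi Y Z J t f = (LBINT s:{0..t}. P f s) - (\<Sum>\<tau>\<in>J. ln (Y \<tau>)) - (\<Sum>\<tau>\<in>J. Q f \<tau>)" for f
    unfolding P_def Q_def by (rule loglik_split)
  have eq: "(loglik phi Y Z J t (\<lambda>x. g x + e * k x) - loglik phi Y Z J t g)
          - (loglik phi Y Z J t (\<lambda>x. h x + e * k x) - loglik phi Y Z J t h)
        = ((LBINT s:{0..t}. P (\<lambda>x. g x + e * k x) s) - (LBINT s:{0..t}. P g s)
           - (LBINT s:{0..t}. P (\<lambda>x. h x + e * k x) s) + (LBINT s:{0..t}. P h s))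
          - ((\<Sum>\<tau>\<in>J. Q (\<lambda>x. g x + e * k x) \<tau>) - (\<Sum>\<tau>\<in>J. Q g \<tau>) - (\<Sum>\<tau>\<in>J. Q (\<lambda>x. h x + e * k x) \<tau>) + (\<Sum>\<tau>\<in>J. Q h \<tau>))"
    unfolding split by simp
  have "\<bar>(loglik phi Y Z J t (\<lambda>x. g x + e * k x) - loglik phi Y Z J t g)
          - (loglik phi Y Z J t (\<lambda>x. h x + e * k x) - loglik phi Y Z J t h)\<bar>
     \<le> (KY * (K2 * E * D)) * (t - 0) + real (card J) * (Kr * E * D)"
    unfolding eq using Ib Sb unfolding Ieq by linarith
  also have "\<dots> = (KY * K2 * t + real (card J) * Kr) * (E * D)" by (simp add: algebra_simps)
  finally show ?thesis by (simp add: E_def D_def)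
qed

end

context sobip
begin

lemma ip_scale:
  assumes f: "f \<in> S"
  shows "ip (\<lambda>x. c * f x) (\<lambda>x. c * f x) = c^2 * ip f f"
proof -
  have cf: "(\<lambda>x. c * f x) \<in> S" using sobolev_lin[OF f f, of c 0] by simp
  have "ip (\<lambda>x. c * f x + 0 * f x) (\<lambda>x. c * f x) = c * ip f (\<lambda>x. c * f x) + 0 * ip f (\<lambda>x. c * f x)"
    by (rule ip_lin[OF f f cf])
  moreover have "ip f (\<lambda>x. c * f x + 0 * f x) = c * ip f f + 0 * ip f f"
    by (rule ip_lin2[OF f f f])
  ultimately show ?thesis by (simp add: power2_eq_square)
qed

end

context full
begin

lemma grad_lip:
  fixes Gl :: "(real \<Rightarrow> real) \<Rightarrow> real \<Rightarrow> real" and M :: real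
  assumes grad: "\<forall>g\<in>S. Gl g \<in> S \<and> (\<forall>h\<in>S. ((\<lambda>\<epsilon>. loglik phi Y Z J t (\<lambda>x. g x + \<epsilon> * h x))
                       has_real_derivative ip (Gl g) h) (at 0))"
  shows "\<exists>C\<ge>0. \<forall>g\<in>S. \<forall>h\<in>S. ip g g \<le> M \<longrightarrow> ip h h \<le> M \<longrightarrow>
           sqrt (ip (\<lambda>x. Gl g x - Gl h x) (\<lambda>x. Gl g x - Gl h x)) \<le> C * sqrt (ip (\<lambda>x. g x - h x) (\<lambda>x. g x - h x))"
proof -
  obtain Kx where Kx: "Kx \<ge> 0" "\<forall>f\<in>S. \<forall>s\<in>{0..t}. \<bar>Xminus t Z f s\<bar> \<le> Kx * sqrt (ip f f)"
    using X_bound by blast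
  define R where "R = Kx * sqrt M + 1"
  obtain K2 where K2: "\<forall>z\<in>{-R..R}. \<bar>phi'' z\<bar> \<le> K2"
    using cont_bound[OF continuous_on_subset[OF pc]] by blast
  obtain Kr where Kr: "\<forall>z\<in>{-R..R}. \<bar>rho'' z\<bar> \<le> Kr"
    using cont_bound[OF continuous_on_subset[OF rho''_cont]] by blast
  obtain KY where KY: "KY \<ge> 0" "\<forall>s\<in>{0..t}. \<bar>Y s\<bar> \<le> KY" using Y_bdd by blast
  define C0 where "C0 = KY * K2 * t + real (card J) * Kr"
  define C where "C = \<bar>C0\<bar> * Kx * Kx"
  have C: "C \<ge> 0" using Kx by (simp add: C_def)
  have main: "sqrt (ip (\<lambda>x. Gl g x - Gl h x) (\<lambda>x. Gl g x - Gl h x)) \<le> C * sqrt (ip (\<lambda>x. g x - h x) (\<lambda>x. g x - h x))"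
    if g: "g \<in> S" and h: "h \<in> S" and gM: "ip g g \<le> M" and hM: "ip h h \<le> M" for g h
  proof -
    have Gg: "Gl g \<in> S" and Gh: "Gl h \<in> S" using grad g h by auto
    define k where "k = (\<lambda>x. Gl g x - Gl h x)"
    have kS: "k \<in> S" unfolding k_def by (rule diff_S[OF Gg Gh])
    have ghS: "(\<lambda>x. g x - h x) \<in> S" by (rule diff_S[OF g h])
    define nk where "nk = sqrt (ip k k)"
    define ngh where "ngh = sqrt (ip (\<lambda>x. g x - h x) (\<lambda>x. g x - h x))"
    have nk0: "0 \<le> nk" using ip_nonneg[OF kS] by (simp add: nk_def)
    have ngh0: "0 \<le> ngh" using ip_nonneg[OF ghS] by (simp add: ngh_def)
    define LL where "LL = (\<lambda>f e. loglik phi Y Z J t (\<lambda>x. f x + e * k x))"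
    have dg: "(LL g has_real_derivative ip (Gl g) k) (at 0)" using grad g kS by (simp add: LL_def)
    have dh: "(LL h has_real_derivative ip (Gl h) k) (at 0)" using grad h kS by (simp add: LL_def)
    have qg: "((\<lambda>e. (LL g (0 + e) - LL g 0) / e) \<longlongrightarrow> ip (Gl g) k) (at 0)" using dg unfolding DERIV_def .
    have qh: "((\<lambda>e. (LL h (0 + e) - LL h 0) / e) \<longlongrightarrow> ip (Gl h) k) (at 0)" using dh unfolding DERIV_def .
    have Q: "((\<lambda>e. ((LL g e - LL g 0) - (LL h e - LL h 0)) / e) \<longlongrightarrow> ip (Gl g) k - ip (Gl h) k) (at 0)"
    proof -
      have "((\<lambda>e. (LL g (0 + e) - LL g 0) / e - (LL h (0 + e) - LL h 0) / e) \<longlongrightarrow> ip (Gl g) k - ip (Gl h) k) (at 0)"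
        by (rule tendsto_diff[OF qg qh])
      moreover have "(\<lambda>e. (LL g (0 + e) - LL g 0) / e - (LL h (0 + e) - LL h 0) / e) = (\<lambda>e. ((LL g e - LL g 0) - (LL h e - LL h 0)) / e)"
        by (simp add: diff_divide_distrib)
      ultimately show ?thesis by simp
    qed
    have L0g: "LL g 0 = loglik phi Y Z J t g" and L0h: "LL h 0 = loglik phi Y Z J t h" by (simp_all add: LL_def)
    have ev: "\<forall>\<^sub>F e in at 0. \<bar>((LL g e - LL g 0) - (LL h e - LL h 0)) / e\<bar> \<le> C * nk * ngh"
      unfolding eventually_at
    proof (intro exI[of _ "1 / (Kx * nk + 1)"] conjI ballI impI)
      show "0 < 1 / (Kx * nk + 1)" using Kx nk0 by (simp add: add_nonneg_pos)
      fix e :: real assume e: "e \<noteq> 0 \<and> dist e 0 < 1 / (Kx * nk + 1)"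
      have pos: "0 < Kx * nk + 1" using Kx nk0 by (simp add: add_nonneg_pos)
      have "\<bar>e\<bar> * (Kx * nk + 1) < 1" using e pos by (simp add: field_simps)
      then have e1: "\<bar>e\<bar> * (Kx * sqrt (ip k k)) \<le> 1" using Kx nk0 by (simp add: nk_def algebra_simps)
      have "\<bar>(LL g e - LL g 0) - (LL h e - LL h 0)\<bar> \<le> C0 * ((\<bar>e\<bar> * (Kx * nk)) * (Kx * ngh))"
        unfolding L0g L0h C0_def nk_def ngh_def
        using second_diff_bound[OF g h kS gM hM Kx R_def K2 Kr KY e1] by (simp add: LL_def)
      also have "\<dots> \<le> \<bar>C0\<bar> * ((\<bar>e\<bar> * (Kx * nk)) * (Kx * ngh))"
        using Kx nk0 ngh0 by (intro mult_right_mono) auto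
      also have "\<dots> = \<bar>e\<bar> * (C * nk * ngh)" by (simp add: C_def algebra_simps)
      finally have "\<bar>(LL g e - LL g 0) - (LL h e - LL h 0)\<bar> \<le> \<bar>e\<bar> * (C * nk * ngh)" .
      then show "\<bar>((LL g e - LL g 0) - (LL h e - LL h 0)) / e\<bar> \<le> C * nk * ngh"
        using e by (simp add: abs_divide field_simps)
    qed
    have lim: "\<bar>ip (Gl g) k - ip (Gl h) k\<bar> \<le> C * nk * ngh"
      by (rule tendsto_upperbound[OF tendsto_rabs[OF Q] ev]) simp
    have "ip (\<lambda>x. 1 * Gl g x + (-1) * Gl h x) k = 1 * ip (Gl g) k + (-1) * ip (Gl h) k"
      by (rule ip_lin[OF Gg Gh kS])
    then have kk: "ip k k = ip (Gl g) k - ip (Gl h) k" by (simp add: k_def)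
    have n2: "nk * nk = ip k k" using ip_nonneg[OF kS] by (simp add: nk_def)
    have "ip k k \<le> C * nk * ngh" using lim unfolding kk[symmetric] by (simp add: abs_le_iff)
    then have "nk * nk \<le> (C * ngh) * nk" unfolding n2 by (simp add: algebra_simps)
    then have "nk \<le> C * ngh"
      using nk0 C ngh0 by (metis mult_right_le_imp_le order_less_le mult_nonneg_nonneg)
    then show ?thesis by (simp add: nk_def ngh_def k_def)
  qed
  show ?thesis using C main by blast
qed

end

theorem lemmaA6:
  fixes phi Y Z :: "real \<Rightarrow> real" and J :: "real set" and t lam :: real and m l :: nat
    and ip :: "(real \<Rightarrow> real) \<Rightarrow> (real \<Rightarrow> real) \<Rightarrow> real"
    and R :: "real \<Rightarrow> real \<Rightarrow> real" and psi :: "nat \<Rightarrow> real \<Rightarrow> real"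
    and Gl :: "(real \<Rightarrow> real) \<Rightarrow> real \<Rightarrow> real"
  assumes t_pos: "0 < t" and m_pos: "1 \<le> m"
    and phi_pos: "\<forall>x. 0 < phi x"
    and phi_C2: "\<exists>phi' phi''. (\<forall>x. (phi has_real_derivative phi' x) (at x) \<and>
                                     (phi' has_real_derivative phi'' x) (at x)) \<and>
                               continuous_on UNIV phi''"
    and Z_cadlag: "cadlag_on t Z"
    and Y_cadlag: "cadlag_on t Y" and Y_nonneg: "\<forall>s\<in>{0..t}. 0 \<le> Y s"
    and J_fin: "finite J" and J_sub: "J \<subseteq> {0<..t}" and Y_jump: "\<forall>\<tau>\<in>J. 0 < Y \<tau>"
    and ip: "sobolev_ip m t ip" and kernel: "rkhs_kernel m t ip R"
    and psi: "\<forall>i<l. psi i \<in> sobolev_space m t"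
    and lam_pos: "0 < lam"
    and grad: "\<forall>g\<in>sobolev_space m t. Gl g \<in> sobolev_space m t \<and>
                 (\<forall>h\<in>sobolev_space m t.
                    ((\<lambda>\<epsilon>. loglik phi Y Z J t (\<lambda>x. g x + \<epsilon> * h x))
                       has_real_derivative ip (Gl g) h) (at 0))"
  shows "\<forall>B\<subseteq>sobolev_space m t. (\<exists>M. \<forall>g\<in>B. ip g g \<le> M) \<longrightarrow>
           (\<exists>L. \<forall>g\<in>B. \<forall>h\<in>B.
              (let DG = (\<lambda>x. (Gl g x + 2 * lam * orth_proj m t ip psi l g x)
                             - (Gl h x + 2 * lam * orth_proj m t ip psi l h x))
               in sqrt (ip DG DG)) \<le> L * sqrt (ip (\<lambda>x. g x - h x) (\<lambda>x. g x - h x)))"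
proof -
  obtain phi' phi'' where pd: "\<forall>x. (phi has_real_derivative phi' x) (at x) \<and> (phi' has_real_derivative phi'' x) (at x)"
    and pc: "continuous_on UNIV phi''" using phi_C2 by blast
  interpret F: full m t ip Z phi Y J phi' phi''
    using t_pos m_pos ip Z_cadlag phi_pos pd pc Y_cadlag Y_nonneg J_fin J_sub Y_jump
    by unfold_locales auto
  show ?thesis
  proof (intro allI impI)
    fix B assume B: "B \<subseteq> sobolev_space m t" and "\<exists>M. \<forall>g\<in>B. ip g g \<le> M"
    then obtain M where M: "\<forall>g\<in>B. ip g g \<le> M" by blast
    obtain C where C: "C \<ge> 0" "\<forall>g\<in>sobolev_space m t. \<forall>h\<in>sobolev_space m t. ip g g \<le> M \<longrightarrow> ip h h \<le> M \<longrightarrow>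
           sqrt (ip (\<lambda>x. Gl g x - Gl h x) (\<lambda>x. Gl g x - Gl h x)) \<le> C * sqrt (ip (\<lambda>x. g x - h x) (\<lambda>x. g x - h x))"
      using F.grad_lip[OF grad, of M] by blast
    show "\<exists>L. \<forall>g\<in>B. \<forall>h\<in>B.
              (let DG = (\<lambda>x. (Gl g x + 2 * lam * orth_proj m t ip psi l g x)
                             - (Gl h x + 2 * lam * orth_proj m t ip psi l h x))
               in sqrt (ip DG DG)) \<le> L * sqrt (ip (\<lambda>x. g x - h x) (\<lambda>x. g x - h x))"
    proof (intro exI[of _ "C + 2 * lam"] ballI)
      fix g h assume gB: "g \<in> B" and hB: "h \<in> B"
      have g: "g \<in> sobolev_space m t" and h: "h \<in> sobolev_space m t" using gB hB B by auto
      have Gg: "Gl g \<in> sobolev_space m t" and Gh: "Gl h \<in> sobolev_space m t" using grad g h by auto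
      define k where "k = (\<lambda>x. Gl g x - Gl h x)"
      define D where "D = (\<lambda>x. orth_proj m t ip psi l g x - orth_proj m t ip psi l h x)"
      define ngh where "ngh = sqrt (ip (\<lambda>x. g x - h x) (\<lambda>x. g x - h x))"
      have kS: "k \<in> sobolev_space m t" unfolding k_def by (rule F.diff_S[OF Gg Gh])
      have DS: "D \<in> sobolev_space m t" and Dl: "sqrt (ip D D) \<le> ngh"
        using F.proj_lip[OF psi g h] unfolding D_def ngh_def by auto
      have cDS: "(\<lambda>x. (2 * lam) * D x) \<in> sobolev_space m t"
        using sobolev_lin[OF DS DS, of "2 * lam" 0] by simp
      have kl: "sqrt (ip k k) \<le> C * ngh" using C g h M gB hB unfolding k_def ngh_def by blast
      have DG: "(\<lambda>x. (Gl g x + 2 * lam * orth_proj m t ip psi l g x) - (Gl h x + 2 * lam * orth_proj m t ip psi l h x))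
              = (\<lambda>x. k x + (2 * lam) * D x)"
        by (simp add: k_def D_def algebra_simps)
      have "sqrt (ip (\<lambda>x. k x + (2 * lam) * D x) (\<lambda>x. k x + (2 * lam) * D x))
            \<le> sqrt (ip k k) + sqrt (ip (\<lambda>x. (2 * lam) * D x) (\<lambda>x. (2 * lam) * D x))"
        by (rule F.ip_tri[OF kS cDS])
      also have "sqrt (ip (\<lambda>x. (2 * lam) * D x) (\<lambda>x. (2 * lam) * D x)) = 2 * lam * sqrt (ip D D)"
        using F.ip_scale[OF DS, of "2 * lam"] lam_pos by (simp add: real_sqrt_mult)
      also have "sqrt (ip k k) + 2 * lam * sqrt (ip D D) \<le> C * ngh + 2 * lam * ngh"
        using kl Dl lam_pos by (intro add_mono mult_left_mono) auto
      finally show "(let DG = (\<lambda>x. (Gl g x + 2 * lam * orth_proj m t ip psi l g x)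
                             - (Gl h x + 2 * lam * orth_proj m t ip psi l h x))
               in sqrt (ip DG DG)) \<le> (C + 2 * lam) * sqrt (ip (\<lambda>x. g x - h x) (\<lambda>x. g x - h x))"
        unfolding Let_def DG ngh_def by (simp add: algebra_simps)
    qed
  qed
qed

end
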